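(* Assume the setting of the context and run APAPC with parameters $\eta = \frac{1}{4\tau L}$, $\theta = \frac{1}{\eta\lambda_{\max}(\mathbf{W})}$, $\alpha = \mu$, $\tau = \min\left\{1,\frac{1}{2}\sqrt{\frac{\chi(\mathbf{W})}{\kappa}}\right\}$. Then for every $k\ge 0$, \[ \frac{1}{\eta}\|x^k - x^*\|^2 + \frac{2(1-\tau)}{\tau}\mathrm{D}_F(x_f^k, x^* ) \le \left(1 + \frac{1}{4}\min\left\{\frac{1}{\sqrt{\kappa\chi(\mathbf{W})}},\frac{1}{\chi(\mathbf{W})}\right\}\right)^{-k} C, \] where $C := \frac{1}{\eta}\|x^0 - x^*\|^2 + \frac{1}{\theta}\|y^0 - y^*\|^2_{\mathbf{W}^\dagger} + \frac{2(1-\tau)}{\tau}\mathrm{D}_F(x_f^0, x^* )$. Consequently, for every $\varepsilon>0$, $\|x^k-x^*\|^2\le\varepsilon$ holds as soon as $k \ge \left(1+4\max\{\sqrt{\kappa\chi(\mathbf{W})},\chi(\mathbf{W})\}\right)\log(\eta C/\varepsilon)$; since each iteration uses one evaluation of $\nabla F$ and one multiplication by $\mathbf{W}$, APAPC reaches $\varepsilon$-accuracy with $\mathcal{O}\big((\sqrt{\kappa\chi(\mathbf{W})}+\chi(\mathbf{W}))\log(1/\varepsilon)\big)$ gradient computations and communication rounds.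
   Context: Let $n\ge 2$, $d\ge 1$. $F:\mathbb{R}^{nd}\to\mathbb{R}$ is differentiable, $\mu$-strongly convex and $L$-smooth ($\nabla F$ is $L$-Lipschitz), $0<\mu\le L$, and $\kappa := L/\mu$. (In the application, $F(x_1,\dots,x_n)=\sum_i f_i(x_i)$ with $x_i\in\mathbb{R}^d$.) $\mathbf{W}$ is a symmetric positive semidefinite $nd\times nd$ matrix whose kernel is the consensus space $\{(x_1,\dots,x_n): x_1=\dots=x_n\}$ (e.g. $\mathbf{W}=\hat{\mathbf{W}}\otimes \mathbf{I}_d$ for a gossip matrix $\hat{\mathbf{W}}$ of a connected graph). $\lambda_{\max}(\mathbf{W})$ is its largest eigenvalue, $\lambda_{\min}^+(\mathbf{W})$ its smallest positive eigenvalue, $\chi(\mathbf{W}) := \lambda_{\max}(\mathbf{W})/\lambda_{\min}^+(\mathbf{W})$. $\mathbf{W}^\dagger:\mathrm{range}(\mathbf{W})\to\mathrm{range}(\mathbf{W})$ is the inverse of $\mathbf{W}$ restricted to $\mathrm{range}(\mathbf{W})$, and $\|y\|^2_{\mathbf{W}^\dagger} := \langle \mathbf{W}^\dagger y, y\rangle$ for $y\in\mathrm{range}(\mathbf{W})$. $x^*$ is the unique minimizer of $F$ over $\ker(\mathbf{W})$, and $y^* := -\nabla F(x^* )$ (which lies in $\mathrm{range}(\mathbf{W})$). $\mathrm{D}_F(u,v) := F(u)-F(v)-\langle \nabla F(v),u-v\rangle$ is the Bregman divergence. APAPC (Accelerated PAPC): given $x^0\in\mathbb{R}^{nd}$, $y^0\in\mathrm{range}(\mathbf{W})$,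 parameters $\eta,\theta,\alpha>0$, $\tau\in(0,1]$, set $x_f^0=x^0$ and for $k=0,1,2,\dots$: $x_g^k = \tau x^k + (1-\tau)x_f^k$; $x^{k+1/2} = (1+\eta\alpha)^{-1}\big(x^k - \eta(\nabla F(x_g^k) - \alpha x_g^k + y^k)\big)$; $y^{k+1} = y^k + \theta \mathbf{W} x^{k+1/2}$; $x^{k+1} = (1+\eta\alpha)^{-1}\big(x^k - \eta(\nabla F(x_g^k) - \alpha x_g^k + y^{k+1})\big)$; $x_f^{k+1} = x_g^k + \frac{2\tau}{2-\tau}(x^{k+1}-x^k)$. *)

theory Defs
  imports "HOL-Analysis.Analysis"
begin

definition strongly_convex :: "real \<Rightarrow> ('a::real_inner \<Rightarrow> real) \<Rightarrow> bool" where
  "strongly_convex \<mu> F \<longleftrightarrow>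
     (\<forall>x y t. 0 \<le> t \<and> t \<le> 1 \<longrightarrow>
        F (t *\<^sub>R x + (1 - t) *\<^sub>R y)
          \<le> t * F x + (1 - t) * F y - \<mu> / 2 * t * (1 - t) * (norm (x - y))\<^sup>2)"

definition consensus :: "(real^'d^'n) set" where
  "consensus = {x. \<forall>i j. x $ i = x $ j}"

definition eigenvalues :: "('a::real_vector \<Rightarrow> 'a) \<Rightarrow> real set" where
  "eigenvalues W = {l. \<exists>v. v \<noteq> 0 \<and> W v = l *\<^sub>R v}"

definition lambda_max :: "('a::real_vector \<Rightarrow> 'a) \<Rightarrow> real" where
  "lambda_max W = Max (eigenvalues W)"

definition lambda_min_pos :: "('a::real_vector \<Rightarrow> 'a) \<Rightarrow> real" where
  "lambda_min_pos W = Min {l \<in> eigenvalues W. 0 < l}"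

definition chi :: "('a::real_vector \<Rightarrow> 'a) \<Rightarrow> real" where
  "chi W = lambda_max W / lambda_min_pos W"

definition Wdag :: "('a::real_vector \<Rightarrow> 'a) \<Rightarrow> 'a \<Rightarrow> 'a" where
  "Wdag W y = (THE z. z \<in> range W \<and> W z = y)"

definition Wdag_sqnorm :: "('a::real_inner \<Rightarrow> 'a) \<Rightarrow> 'a \<Rightarrow> real" where
  "Wdag_sqnorm W y = inner (Wdag W y) y"

definition bregman :: "('a::real_inner \<Rightarrow> real) \<Rightarrow> ('a \<Rightarrow> 'a) \<Rightarrow> 'a \<Rightarrow> 'a \<Rightarrow> real" where
  "bregman F gF u v = F u - F v - inner (gF v) (u - v)"

definition apapc_step ::
  "('a::real_vector \<Rightarrow> 'a) \<Rightarrow> ('a \<Rightarrow> 'a) \<Rightarrow> real \<Rightarrow> real \<Rightarrow> real \<Rightarrow> real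
     \<Rightarrow> 'a \<times> 'a \<times> 'a \<Rightarrow> 'a \<times> 'a \<times> 'a" where
  "apapc_step gF W \<eta> \<theta> \<alpha> \<tau> s =
     (let x = fst s; y = fst (snd s); xf = snd (snd s);
          xg = \<tau> *\<^sub>R x + (1 - \<tau>) *\<^sub>R xf;
          xh = inverse (1 + \<eta> * \<alpha>) *\<^sub>R (x - \<eta> *\<^sub>R (gF xg - \<alpha> *\<^sub>R xg + y));
          y' = y + \<theta> *\<^sub>R W xh;
          x' = inverse (1 + \<eta> * \<alpha>) *\<^sub>R (x - \<eta> *\<^sub>R (gF xg - \<alpha> *\<^sub>R xg + y'));
          xf' = xg + (2 * \<tau> / (2 - \<tau>)) *\<^sub>R (x' - x)
      in (x', y', xf'))"

primrec apapc ::
  "('a::real_vector \<Rightarrow> 'a) \<Rightarrow> ('a \<Rightarrow> 'a) \<Rightarrow> real \<Rightarrow> real \<Rightarrow> real \<Rightarrow> real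
     \<Rightarrow> 'a \<Rightarrow> 'a \<Rightarrow> nat \<Rightarrow> 'a \<times> 'a \<times> 'a" where
  "apapc gF W \<eta> \<theta> \<alpha> \<tau> x0 y0 0 = (x0, y0, x0)"
| "apapc gF W \<eta> \<theta> \<alpha> \<tau> x0 y0 (Suc k) =
     apapc_step gF W \<eta> \<theta> \<alpha> \<tau> (apapc gF W \<eta> \<theta> \<alpha> \<tau> x0 y0 k)"

end

theory Submission
  imports Defs
begin


lemma line_deriv:
  fixes F :: "'a::real_inner \<Rightarrow> real"
  assumes grad: "\<And>x. (F has_derivative (\<lambda>h. inner (gF x) h)) (at x)"
  shows "((\<lambda>t. F (x + t *\<^sub>R d)) has_real_derivative inner (gF (x + t *\<^sub>R d)) d) (at t within S)"
proof -
  have l: "((\<lambda>t. x + t *\<^sub>R d) has_derivative (\<lambda>s. s *\<^sub>R d)) (at t within S)"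
    by (auto intro!: derivative_eq_intros)
  have "((\<lambda>t. F (x + t *\<^sub>R d)) has_derivative (\<lambda>s. inner (gF (x + t *\<^sub>R d)) (s *\<^sub>R d))) (at t within S)"
    using has_derivative_compose[OF l grad] .
  moreover have "(\<lambda>s. inner (gF (x + t *\<^sub>R d)) (s *\<^sub>R d)) = (*) (inner (gF (x + t *\<^sub>R d)) d)"
    by (auto simp: mult.commute)
  ultimately show ?thesis by (simp add: has_field_derivative_def)
qed

lemma sconv_grad:
  fixes F :: "'a::real_inner \<Rightarrow> real"
  assumes grad: "\<And>x. (F has_derivative (\<lambda>h. inner (gF x) h)) (at x)"
    and sc: "strongly_convex \<mu> F"
  shows "F x + inner (gF x) (y - x) + \<mu> / 2 * (norm (y - x))\<^sup>2 \<le> F y"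
proof -
  define d where "d = y - x"
  define h where "h = (\<lambda>t. F (x + t *\<^sub>R d))"
  have hd: "(h has_real_derivative inner (gF x) d) (at 0 within {0<..})"
    using line_deriv[OF grad, of x d 0] by (simp add: h_def)
  hence lim: "((\<lambda>t. (h t - h 0) / t) \<longlongrightarrow> inner (gF x) d) (at 0 within {0<..})"
    by (simp add: has_field_derivative_iff)
  have lim2: "((\<lambda>t. F y - F x - \<mu> / 2 * (1 - t) * (norm d)\<^sup>2) \<longlongrightarrow> F y - F x - \<mu> / 2 * (1 - 0) * (norm d)\<^sup>2) (at 0 within {0<..})"
    by (intro tendsto_intros)
  have ev: "eventually (\<lambda>t. (h t - h 0) / t \<le> F y - F x - \<mu> / 2 * (1 - t) * (norm d)\<^sup>2) (at 0 within {0<..})"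
    unfolding eventually_at_filter
  proof (rule eventually_mono[OF eventually_nhds_metric[THEN iffD2]])
    show "\<exists>e>0. \<forall>t::real. dist t 0 < e \<longrightarrow> t < 1" by (intro exI[of _ 1]) (auto simp: dist_real_def)
  next
    fix t :: real assume t1: "t < 1"
    show "t \<noteq> 0 \<longrightarrow> t \<in> {0<..} \<longrightarrow> (h t - h 0) / t \<le> F y - F x - \<mu> / 2 * (1 - t) * (norm d)\<^sup>2"
    proof (intro impI)
      assume "t \<noteq> 0" "t \<in> {0<..}"
      hence t0: "0 < t" by auto
      have "F (t *\<^sub>R y + (1 - t) *\<^sub>R x) \<le> t * F y + (1 - t) * F x - \<mu> / 2 * t * (1 - t) * (norm (y - x))\<^sup>2"
        using sc t0 t1 unfolding strongly_convex_def by auto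
      moreover have "t *\<^sub>R y + (1 - t) *\<^sub>R x = x + t *\<^sub>R d"
        by (simp add: d_def algebra_simps)
      ultimately have "h t - h 0 \<le> t * (F y - F x - \<mu> / 2 * (1 - t) * (norm d)\<^sup>2)"
        by (simp add: h_def d_def algebra_simps)
      thus "(h t - h 0) / t \<le> F y - F x - \<mu> / 2 * (1 - t) * (norm d)\<^sup>2"
        using t0 by (simp add: divide_simps mult.commute)
    qed
  qed
  have "inner (gF x) d \<le> F y - F x - \<mu> / 2 * (1 - 0) * (norm d)\<^sup>2"
    by (rule tendsto_le[OF _ lim2 lim ev]) simp
  thus ?thesis by (simp add: d_def)
qed

lemma descent:
  fixes F :: "'a::real_inner \<Rightarrow> real"
  assumes grad: "\<And>x. (F has_derivative (\<lambda>h. inner (gF x) h)) (at x)"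
    and smooth: "\<And>x y. norm (gF x - gF y) \<le> L * norm (x - y)"
  shows "F y \<le> F x + inner (gF x) (y - x) + L / 2 * (norm (y - x))\<^sup>2"
proof -
  define d where "d = y - x"
  define \<phi> where "\<phi> = (\<lambda>t. F (x + t *\<^sub>R d) - t * inner (gF x) d - L / 2 * t\<^sup>2 * (norm d)\<^sup>2)"
  have key: "\<exists>y. (\<phi> has_real_derivative y) (at t) \<and> y \<le> 0" if t: "0 \<le> t" "t \<le> 1" for t :: real
  proof -
    have "(\<phi> has_real_derivative inner (gF (x + t *\<^sub>R d)) d - inner (gF x) d - L / 2 * (2 * t) * (norm d)\<^sup>2) (at t)"
      unfolding \<phi>_def
      by (auto intro!: derivative_eq_intros line_deriv[OF grad])
    moreover have "inner (gF (x + t *\<^sub>R d)) d - inner (gF x) d - L / 2 * (2 * t) * (norm d)\<^sup>2 \<le> 0"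
    proof -
      have "inner (gF (x + t *\<^sub>R d)) d - inner (gF x) d = inner (gF (x + t *\<^sub>R d) - gF x) d"
        by (simp add: inner_diff_left)
      also have "\<dots> \<le> norm (gF (x + t *\<^sub>R d) - gF x) * norm d" by (rule norm_cauchy_schwarz)
      also have "\<dots> \<le> (L * norm (t *\<^sub>R d)) * norm d"
        using smooth[of "x + t *\<^sub>R d" x] by (intro mult_right_mono) auto
      also have "\<dots> = L / 2 * (2 * t) * (norm d)\<^sup>2" using t by (simp add: power2_eq_square)
      finally show ?thesis by simp
    qed
    ultimately show "\<exists>y. (\<phi> has_real_derivative y) (at t) \<and> y \<le> 0" by blast
  qed
  have "\<phi> 1 \<le> \<phi> 0"
    by (rule DERIV_nonpos_imp_nonincreasing[of 0 1 \<phi>]) (use key in auto)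
  thus ?thesis by (simp add: \<phi>_def d_def)
qed

lemma cocoercive:
  fixes F :: "'a::real_inner \<Rightarrow> real"
  assumes grad: "\<And>x. (F has_derivative (\<lambda>h. inner (gF x) h)) (at x)"
    and smooth: "\<And>x y. norm (gF x - gF y) \<le> L * norm (x - y)"
    and sc: "strongly_convex \<mu> F" and mu: "0 \<le> \<mu>" and L: "0 < L"
  shows "(norm (gF x - gF y))\<^sup>2 \<le> 2 * L * bregman F gF x y"
proof -
  define v where "v = gF x - gF y"
  define z where "z = x - (1 / L) *\<^sub>R v"
  have 1: "F y + inner (gF y) (z - y) \<le> F z"
    using sconv_grad[OF grad sc, of y z] mu by (smt (verit) mult_nonneg_nonneg zero_le_power2 divide_nonneg_pos)
  have 2: "F z \<le> F x + inner (gF x) (z - x) + L / 2 * (norm (z - x))\<^sup>2"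
    by (rule descent[OF grad smooth])
  have zx: "z - x = - ((1 / L) *\<^sub>R v)" by (simp add: z_def)
  have nz: "(norm (z - x))\<^sup>2 = (1 / L)\<^sup>2 * (norm v)\<^sup>2"
    unfolding zx norm_minus_cancel norm_scaleR using L by (simp add: power_mult_distrib power_divide)
  have zy: "z - y = (x - y) - (1 / L) *\<^sub>R v" by (simp add: z_def)
  have gx: "inner (gF x) v = inner v v + inner (gF y) v" by (simp add: v_def inner_diff_left)
  have 3: "inner (gF x) (z - x) - inner (gF y) (z - y) = - inner (gF y) (x - y) - (1 / L) * (norm v)\<^sup>2"
    unfolding zx zy using gx by (simp add: inner_diff_right v_def[symmetric] power2_norm_eq_inner algebra_simps inner_diff_left add_divide_distrib[symmetric])
  have 4: "L / 2 * ((1 / L)\<^sup>2 * (norm v)\<^sup>2) = (1 / (2 * L)) * (norm v)\<^sup>2"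
    using L by (simp add: power2_eq_square field_simps)
  have "(1 / (2 * L)) * (norm v)\<^sup>2 \<le> bregman F gF x y"
    using 1 2 3 4 nz unfolding bregman_def by (simp add: algebra_simps)
  thus ?thesis using L unfolding v_def by (simp add: field_simps)
qed


lemma quad_lin_zero:
  fixes b c :: real
  assumes "\<And>t. 0 \<le> 2 * t * b + t\<^sup>2 * c"
  shows "b = 0"
proof (rule ccontr)
  assume b: "b \<noteq> 0"
  define t where "t = - b / (\<bar>c\<bar> + 1)"
  have p: "\<bar>c\<bar> + 1 > 0" by simp
  have "t\<^sup>2 * c \<le> t\<^sup>2 * \<bar>c\<bar>" by (intro mult_left_mono) auto
  also have "\<dots> = b\<^sup>2 * \<bar>c\<bar> / (\<bar>c\<bar> + 1)\<^sup>2" by (simp add: t_def power_divide)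
  also have "\<dots> \<le> b\<^sup>2 / (\<bar>c\<bar> + 1)"
    using p by (simp add: divide_simps power2_eq_square mult_left_mono mult_right_mono)
  finally have "2 * t * b + t\<^sup>2 * c \<le> - 2 * b\<^sup>2 / (\<bar>c\<bar> + 1) + b\<^sup>2 / (\<bar>c\<bar> + 1)"
    by (simp add: t_def power2_eq_square)
  also have "\<dots> < 0" using b p by (simp add: divide_simps)
  finally show False using assms[of t] by simp
qed

lemma quad_disc:
  fixes a b c :: real
  assumes h: "\<And>t. 0 \<le> a + 2 * t * b + t\<^sup>2 * c" and c: "0 \<le> c"
  shows "b\<^sup>2 \<le> a * c"
proof (cases "c = 0")
  case True
  have "b = 0"
  proof (rule ccontr)
    assume "b \<noteq> 0"
    hence e: "2 * (- (\<bar>a\<bar> + 1) / (2 * b)) * b = - (\<bar>a\<bar> + 1)" by (simp add: field_simps)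
    have "a + 2 * (- (\<bar>a\<bar> + 1) / (2 * b)) * b + (- (\<bar>a\<bar> + 1) / (2 * b))\<^sup>2 * c < 0"
      using True e by simp
    thus False using h by (meson not_le)
  qed
  thus ?thesis using True by simp
next
  case False
  hence c: "c > 0" using c by simp
  have "0 \<le> a + 2 * (- b / c) * b + (- b / c)\<^sup>2 * c" by (rule h)
  also have "\<dots> = a - b\<^sup>2 / c" using c by (simp add: power2_eq_square field_simps)
  finally show ?thesis using c by (simp add: field_simps)
qed


lemma ne_of_mem: "x \<in> A \<Longrightarrow> A \<noteq> {}" by auto

lemma eig_extreme:
  fixes W :: "'a::euclidean_space \<Rightarrow> 'a"
  assumes lin: "linear W" and sym: "\<And>x y. inner (W x) y = inner x (W y)"
    and S: "subspace S" and WS: "\<And>x. x \<in> S \<Longrightarrow> W x \<in> S" and ne: "\<exists>u\<in>S. u \<noteq> 0"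
  obtains v m where "v \<in> S" "norm v = 1" "W v = m *\<^sub>R v"
    "\<And>u. u \<in> S \<Longrightarrow> m * (norm u)\<^sup>2 \<le> inner u (W u)"
proof -
  define K where "K = sphere 0 1 \<inter> S"
  have "compact K" unfolding K_def
    by (intro compact_Int_closed compact_sphere closed_subspace S)
  moreover obtain u where u: "u \<in> S" "u \<noteq> 0" using ne by (elim bexE)
  hence "(1 / norm u) *\<^sub>R u \<in> K" unfolding K_def by (auto simp: subspace_scale[OF S])
  hence "K \<noteq> {}" by (rule ne_of_mem)
  moreover have "continuous_on K (\<lambda>u. inner u (W u))"
    using lin by (intro continuous_intros linear_continuous_on) (auto simp: linear_conv_bounded_linear)
  ultimately obtain v where v: "v \<in> K" and vmin: "\<And>y. y \<in> K \<Longrightarrow> inner v (W v) \<le> inner y (W y)"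
    using continuous_attains_inf[of K "\<lambda>u. inner u (W u)"] by metis
  define m where "m = inner v (W v)"
  have vS: "v \<in> S" and nv: "norm v = 1" using v by (auto simp: K_def)
  have bound: "m * (norm u)\<^sup>2 \<le> inner u (W u)" if uS: "u \<in> S" for u
  proof (cases "u = 0")
    case True thus ?thesis by (simp add: linear_0[OF lin])
  next
    case False
    hence "(1 / norm u) *\<^sub>R u \<in> K" using uS unfolding K_def by (auto simp: subspace_scale[OF S])
    hence "m \<le> inner ((1 / norm u) *\<^sub>R u) (W ((1 / norm u) *\<^sub>R u))" unfolding m_def by (rule vmin)
    also have "\<dots> = inner u (W u) / (norm u)\<^sup>2"
      by (simp add: linear_cmul[OF lin] power2_eq_square)
    finally show ?thesis using False by (simp add: field_simps)
  qed
  have eig: "W v = m *\<^sub>R v"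
  proof -
    define w where "w = W v - m *\<^sub>R v"
    have wS: "w \<in> S" unfolding w_def using vS WS by (intro subspace_diff[OF S] subspace_scale[OF S]) auto
    have "inner w w = 0"
    proof -
      have "inner (W v - m *\<^sub>R v) w = 0"
      proof (rule quad_lin_zero[where c = "inner w (W w) - m * (norm w)\<^sup>2"])
        fix t :: real
        have "v + t *\<^sub>R w \<in> S" using vS wS by (intro subspace_add[OF S] subspace_scale[OF S])
        hence "m * (norm (v + t *\<^sub>R w))\<^sup>2 \<le> inner (v + t *\<^sub>R w) (W (v + t *\<^sub>R w))" by (rule bound)
        moreover have "inner (v + t *\<^sub>R w) (W (v + t *\<^sub>R w)) = m + 2 * t * inner (W v) w + t\<^sup>2 * inner w (W w)"
          using sym[of v w] sym[of w v] unfolding m_def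
          by (simp add: linear_add[OF lin] linear_cmul[OF lin] inner_add_left inner_add_right power2_eq_square algebra_simps inner_commute)
        moreover have "(norm (v + t *\<^sub>R w))\<^sup>2 = 1 + 2 * t * inner v w + t\<^sup>2 * (norm w)\<^sup>2"
        proof -
          have vv: "inner v v = 1" using nv by (simp add: norm_eq_1)
          show ?thesis by (simp only: power2_norm_eq_inner)
            (simp add: inner_add_left inner_add_right vv inner_commute[of w v] power2_eq_square algebra_simps)
        qed
        ultimately show "0 \<le> 2 * t * inner (W v - m *\<^sub>R v) w + t\<^sup>2 * (inner w (W w) - m * (norm w)\<^sup>2)"
          by (simp add: inner_diff_left algebra_simps)
      qed
      thus ?thesis by (simp add: w_def)
    qed
    thus ?thesis by (simp add: w_def)
  qed
  show ?thesis using that[OF vS nv eig bound] .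
qed


lemma eig_finite:
  fixes W :: "'a::euclidean_space \<Rightarrow> 'a"
  assumes sym: "\<And>x y. inner (W x) y = inner x (W y)"
  shows "finite (eigenvalues W)"
proof -
  define vf where "vf = (\<lambda>l. SOME v. v \<noteq> 0 \<and> W v = l *\<^sub>R v)"
  have vf: "vf l \<noteq> 0 \<and> W (vf l) = l *\<^sub>R vf l" if "l \<in> eigenvalues W" for l
  proof -
    have "\<exists>v. v \<noteq> 0 \<and> W v = l *\<^sub>R v" using that by (simp add: eigenvalues_def)
    thus ?thesis unfolding vf_def by (rule someI_ex)
  qed
  have inj: "inj_on vf (eigenvalues W)"
  proof (rule inj_onI)
    fix l l' assume a: "l \<in> eigenvalues W" "l' \<in> eigenvalues W" "vf l = vf l'"
    have "W (vf l) = l' *\<^sub>R vf l" using vf[OF a(2)] a(3) by simp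
    hence "l *\<^sub>R vf l = l' *\<^sub>R vf l" using vf[OF a(1)] by simp
    moreover have "vf l \<noteq> 0" using vf[OF a(1)] by blast
    ultimately show "l = l'" by (metis scaleR_cancel_right)
  qed
  have orth: "pairwise orthogonal (vf ` eigenvalues W)"
    unfolding pairwise_def
  proof (clarify)
    fix l l' assume l: "l \<in> eigenvalues W" and l': "l' \<in> eigenvalues W" and ne: "vf l \<noteq> vf l'"
    hence "l \<noteq> l'" by auto
    have "l * inner (vf l) (vf l') = inner (W (vf l)) (vf l')" using vf[OF l] by simp
    also have "\<dots> = inner (vf l) (W (vf l'))" by (rule sym)
    also have "\<dots> = l' * inner (vf l) (vf l')" using vf[OF l'] by simp
    finally show "orthogonal (vf l) (vf l')" using \<open>l \<noteq> l'\<close> by (simp add: orthogonal_def)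
  qed
  have "0 \<notin> vf ` eigenvalues W"
  proof
    assume "0 \<in> vf ` eigenvalues W"
    then obtain l where "l \<in> eigenvalues W" "0 = vf l" by (rule imageE)
    thus False using vf[of l] by simp
  qed
  hence "independent (vf ` eigenvalues W)" by (rule pairwise_orthogonal_independent[OF orth])
  hence "finite (vf ` eigenvalues W)" by (rule finiteI_independent)
  thus ?thesis using inj by (rule finite_imageD)
qed



lemma ker_orth_range:
  fixes W :: "'a::euclidean_space \<Rightarrow> 'a"
  assumes sym: "\<And>x y. inner (W x) y = inner x (W y)" and "W k = 0"
  shows "inner k (W z) = 0"
  using sym[of k z] assms(2) by simp

lemma range_ker_zero:
  fixes W :: "'a::euclidean_space \<Rightarrow> 'a"
  assumes sym: "\<And>x y. inner (W x) y = inner x (W y)" and "W z = 0" and "z \<in> range W"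
  shows "z = 0"
proof -
  obtain u where u: "z = W u" using assms(3) by (elim rangeE)
  have "inner z z = inner u (W z)" using sym[of u z] u by simp
  thus ?thesis using assms(2) by simp
qed

lemma decomp:
  fixes W :: "'a::euclidean_space \<Rightarrow> 'a"
  assumes lin: "linear W" and sym: "\<And>x y. inner (W x) y = inner x (W y)"
  obtains p k where "p \<in> range W" "W k = 0" "u = p + k"
proof -
  have sub: "subspace (range W)" by (rule linear_subspace_image[OF lin subspace_UNIV])
  obtain p k where p: "p \<in> span (range W)" and k: "\<And>w. w \<in> span (range W) \<Longrightarrow> orthogonal k w"
    and u: "u = p + k"
    using orthogonal_subspace_decomp_exists[of "range W" u] by metis
  have pr: "p \<in> range W" using p sub by (metis span_eq_iff)
  have "orthogonal k (W (W k))" by (rule k) (simp add: span_base)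
  hence "inner (W k) (W k) = 0" using sym[of k "W k"] by (simp add: orthogonal_def)
  hence "W k = 0" by simp
  thus ?thesis using that pr u by blast
qed

lemma in_range_if_orth_ker:
  fixes W :: "'a::euclidean_space \<Rightarrow> 'a"
  assumes lin: "linear W" and sym: "\<And>x y. inner (W x) y = inner x (W y)"
    and orth: "\<And>k. W k = 0 \<Longrightarrow> inner y k = 0"
  shows "y \<in> range W"
proof -
  obtain p k where p: "p \<in> range W" and k: "W k = 0" and y: "y = p + k"
    by (rule decomp[OF lin sym])
  obtain z where z: "p = W z" using p by (elim rangeE)
  have "inner p k = 0" using ker_orth_range[OF sym k, of z] z by (simp add: inner_commute)
  moreover have "inner y k = 0" by (rule orth[OF k])
  ultimately have "inner k k = 0" using y by (simp add: inner_add_left)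
  thus ?thesis using y p by simp
qed

lemma dag_sq:
  fixes W :: "'a::euclidean_space \<Rightarrow> 'a"
  assumes lin: "linear W" and sym: "\<And>x y. inner (W x) y = inner x (W y)"
  shows "Wdag_sqnorm W (W u) = inner u (W u)"
proof -
  obtain p k where p: "p \<in> range W" and k: "W k = 0" and u: "u = p + k"
    by (rule decomp[OF lin sym])
  have Wu: "W u = W p" using u k by (simp add: linear_add[OF lin])
  have the: "Wdag W (W u) = p"
    unfolding Wdag_def
  proof (rule the_equality)
    show "p \<in> range W \<and> W p = W u" using p Wu by simp
  next
    fix z assume z: "z \<in> range W \<and> W z = W u"
    have "z - p \<in> range W"
      using z p by (intro subspace_diff[OF linear_subspace_image[OF lin subspace_UNIV]]) auto
    moreover have "W (z - p) = 0" using z Wu by (simp add: linear_diff[OF lin])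
    ultimately have "z - p = 0" by (rule range_ker_zero[OF sym, rotated])
    thus "z = p" by simp
  qed
  have "inner u (W u) = inner p (W p) + inner k (W p)" using u Wu by (simp add: inner_add_left)
  also have "inner k (W p) = 0" by (rule ker_orth_range[OF sym k])
  finally have "inner u (W u) = inner p (W u)" using Wu by simp
  moreover have "Wdag_sqnorm W (W u) = inner p (W u)" unfolding Wdag_sqnorm_def the by simp
  ultimately show ?thesis by simp
qed

lemma nonzero_exists: "\<exists>u::'a::euclidean_space. u \<noteq> 0"
  using nonzero_Basis SOME_Basis by metis

lemma lmax_props:
  fixes W :: "'a::euclidean_space \<Rightarrow> 'a"
  assumes lin: "linear W" and sym: "\<And>x y. inner (W x) y = inner x (W y)"
  shows "lambda_max W \<in> eigenvalues W" "\<And>u. inner u (W u) \<le> lambda_max W * (norm u)\<^sup>2"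
proof -
  have lin': "linear (\<lambda>x. - W x)" using lin by (simp add: linear_compose_neg)
  have sym': "\<And>x y. inner (- W x) y = inner x (- W y)" using sym by simp
  obtain v m where v: "norm v = 1" "- W v = m *\<^sub>R v"
    and b: "\<And>u. m * (norm u)\<^sup>2 \<le> inner u (- W u)"
    using eig_extreme[OF lin' sym' subspace_UNIV] nonzero_exists by (metis UNIV_I)
  have Wv: "W v = (- m) *\<^sub>R v" using arg_cong[OF v(2), of uminus] by simp
  have mE: "- m \<in> eigenvalues W" unfolding eigenvalues_def using v(1) Wv
    by (auto intro!: exI[of _ v])
  have le: "l \<le> - m" if "l \<in> eigenvalues W" for l
  proof -
    have "\<exists>u. u \<noteq> 0 \<and> W u = l *\<^sub>R u" using that by (simp add: eigenvalues_def)
    then obtain u where u: "u \<noteq> 0" "W u = l *\<^sub>R u" by (elim exE conjE)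
    have "m * (norm u)\<^sup>2 \<le> - (l * (norm u)\<^sup>2)" using b[of u] u by (simp add: power2_norm_eq_inner)
    hence "l * (norm u)\<^sup>2 \<le> - m * (norm u)\<^sup>2" by simp
    moreover have "0 < (norm u)\<^sup>2" using u by simp
    ultimately show ?thesis by (meson mult_le_cancel_right_pos)
  qed
  have mx: "lambda_max W = - m" unfolding lambda_max_def
    by (rule Max_eqI[OF eig_finite[OF sym] le mE])
  show "lambda_max W \<in> eigenvalues W" using mE mx by simp
  show "inner u (W u) \<le> lambda_max W * (norm u)\<^sup>2" for u using b[of u] mx by simp
qed

lemma lmin_props:
  fixes W :: "'a::euclidean_space \<Rightarrow> 'a"
  assumes lin: "linear W" and sym: "\<And>x y. inner (W x) y = inner x (W y)"
    and psd: "\<And>x. 0 \<le> inner x (W x)" and nz: "\<exists>u. W u \<noteq> 0"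
  shows "0 < lambda_min_pos W" "lambda_min_pos W \<in> eigenvalues W"
    "\<And>u. u \<in> range W \<Longrightarrow> lambda_min_pos W * (norm u)\<^sup>2 \<le> inner u (W u)"
proof -
  have sub: "subspace (range W)" by (rule linear_subspace_image[OF lin subspace_UNIV])
  have ne: "\<exists>u\<in>range W. u \<noteq> 0" using nz by auto
  obtain v m where v: "v \<in> range W" "norm v = 1" "W v = m *\<^sub>R v"
    and b: "\<And>u. u \<in> range W \<Longrightarrow> m * (norm u)\<^sup>2 \<le> inner u (W u)"
    by (rule eig_extreme[OF lin sym sub _ ne]) auto
  have vv: "inner v v = 1" using v(2) by (simp add: norm_eq_1)
  have mq: "m = inner v (W v)" using v(3) vv by simp
  have m0: "m \<noteq> 0"
  proof
    assume "m = 0"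
    hence "W v = 0" using v(3) by simp
    hence "v = 0" using range_ker_zero[OF sym _ v(1)] by simp
    thus False using v(2) by simp
  qed
  have mpos: "0 < m" using psd[of v] mq m0 by simp
  have mE: "m \<in> eigenvalues W" unfolding eigenvalues_def using v by (auto intro!: exI[of _ v])
  define P where "P = {l \<in> eigenvalues W. 0 < l}"
  have fP: "finite P" unfolding P_def using eig_finite[OF sym] by simp
  have mP: "m \<in> P" unfolding P_def using mE mpos by simp
  have le: "lambda_min_pos W \<le> m" unfolding lambda_min_pos_def P_def[symmetric] by (rule Min_le[OF fP mP])
  have inP: "lambda_min_pos W \<in> P" unfolding lambda_min_pos_def P_def[symmetric]
    using fP mP by (intro Min_in) auto
  show "0 < lambda_min_pos W" using inP by (simp add: P_def)
  show "lambda_min_pos W \<in> eigenvalues W" using inP by (simp add: P_def)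
  show "lambda_min_pos W * (norm u)\<^sup>2 \<le> inner u (W u)" if "u \<in> range W" for u
    using b[OF that] le by (meson mult_right_mono order_trans zero_le_power2)
qed



lemma quad_expand:
  fixes W :: "'a::euclidean_space \<Rightarrow> 'a"
  assumes lin: "linear W" and sym: "\<And>x y. inner (W x) y = inner x (W y)"
  shows "inner (x + t *\<^sub>R y) (W (x + t *\<^sub>R y)) = inner x (W x) + 2 * t * inner (W x) y + t\<^sup>2 * inner y (W y)"
proof -
  have "W (x + t *\<^sub>R y) = W x + t *\<^sub>R W y" by (simp add: linear_add[OF lin] linear_cmul[OF lin])
  hence "inner (x + t *\<^sub>R y) (W (x + t *\<^sub>R y)) = inner x (W x) + t * inner x (W y) + t * inner y (W x) + t * t * inner y (W y)"
    by (simp add: inner_add_left inner_add_right algebra_simps)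
  also have "inner x (W y) = inner (W x) y" by (rule sym[symmetric])
  also have "inner y (W x) = inner (W x) y" by (rule inner_commute)
  finally show ?thesis by (simp add: power2_eq_square)
qed

lemma Wsq_le:
  fixes W :: "'a::euclidean_space \<Rightarrow> 'a"
  assumes lin: "linear W" and sym: "\<And>x y. inner (W x) y = inner x (W y)"
    and psd: "\<And>x. 0 \<le> inner x (W x)" and lm: "\<And>u. inner u (W u) \<le> lm * (norm u)\<^sup>2" and lm0: "0 \<le> lm"
  shows "(norm (W x))\<^sup>2 \<le> lm * inner x (W x)"
proof -
  define y where "y = W x"
  have "(inner (W x) y)\<^sup>2 \<le> inner x (W x) * inner y (W y)"
  proof (rule quad_disc)
    fix t :: real show "0 \<le> inner x (W x) + 2 * t * inner (W x) y + t\<^sup>2 * inner y (W y)"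
      using psd[of "x + t *\<^sub>R y"] quad_expand[OF lin sym] by simp
  qed (rule psd)
  also have "\<dots> \<le> inner x (W x) * (lm * (norm y)\<^sup>2)" by (intro mult_left_mono lm psd)
  finally have h: "((norm y)\<^sup>2)\<^sup>2 \<le> (lm * inner x (W x)) * (norm y)\<^sup>2"
    by (simp add: y_def power2_norm_eq_inner algebra_simps)
  show ?thesis
  proof (cases "norm y = 0")
    case True
    thus ?thesis using lm0 using True psd[of x] by (simp add: y_def)
  next
    case False
    hence "0 < (norm y)\<^sup>2" by simp
    thus ?thesis using h by (simp add: power2_eq_square y_def mult_le_cancel_right_pos)
  qed
qed

lemma q_le:
  fixes W :: "'a::euclidean_space \<Rightarrow> 'a"
  assumes lin: "linear W" and sym: "\<And>x y. inner (W x) y = inner x (W y)"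
    and psd: "\<And>x. 0 \<le> inner x (W x)" and lp: "0 < lmin"
    and lmin: "\<And>u. u \<in> range W \<Longrightarrow> lmin * (norm u)\<^sup>2 \<le> inner u (W u)"
  shows "lmin * inner z (W z) \<le> (norm (W z))\<^sup>2"
proof -
  obtain p k where p: "p \<in> range W" and k: "W k = 0" and z: "z = p + k"
    by (rule decomp[OF lin sym])
  have Wz: "W z = W p" using z k by (simp add: linear_add[OF lin])
  have qz: "inner z (W z) = inner p (W p)"
    using z Wz ker_orth_range[OF sym k, of p] by (simp add: inner_add_left)
  define q where "q = inner p (W p)"
  have q0: "0 \<le> q" unfolding q_def by (rule psd)
  have cs: "q \<le> norm p * norm (W p)" unfolding q_def by (rule norm_cauchy_schwarz)
  have "lmin * q * q \<le> lmin * (norm p * norm (W p)) * (norm p * norm (W p))"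
    using cs q0 lp by (intro mult_mono mult_left_mono) auto
  also have "\<dots> = (lmin * (norm p)\<^sup>2) * (norm (W p))\<^sup>2" by (simp add: power2_eq_square algebra_simps)
  also have "\<dots> \<le> q * (norm (W p))\<^sup>2" unfolding q_def by (intro mult_right_mono lmin p) simp
  finally have h: "lmin * q * q \<le> q * (norm (W p))\<^sup>2" .
  show ?thesis
  proof (cases "q = 0")
    case True thus ?thesis using qz q_def by simp
  next
    case False
    hence "0 < q" using q0 by simp
    hence "lmin * q \<le> (norm (W p))\<^sup>2" using h by (simp add: algebra_simps mult_le_cancel_left_pos)
    thus ?thesis using qz Wz q_def by simp
  qed
qed


lemma norm_sum3:
  fixes u v w :: "'a::real_inner"
  shows "(norm (u + v + w))\<^sup>2 \<le> 2 * (norm u)\<^sup>2 + 4 * (norm v)\<^sup>2 + 4 * (norm w)\<^sup>2"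
proof -
  have p: "(norm (x + y))\<^sup>2 \<le> 2 * (norm x)\<^sup>2 + 2 * (norm y)\<^sup>2" for x y :: 'a
  proof -
    have "(norm (x + y))\<^sup>2 + (norm (x - y))\<^sup>2 = 2 * (norm x)\<^sup>2 + 2 * (norm y)\<^sup>2"
      by (simp add: power2_norm_eq_inner inner_add_left inner_add_right inner_diff_left inner_diff_right inner_commute[of y x])
    thus ?thesis by (smt (verit) zero_le_power2)
  qed
  have "(norm (u + (v + w)))\<^sup>2 \<le> 2 * (norm u)\<^sup>2 + 2 * (norm (v + w))\<^sup>2" by (rule p)
  also have "\<dots> \<le> 2 * (norm u)\<^sup>2 + 2 * (2 * (norm v)\<^sup>2 + 2 * (norm w)\<^sup>2)" using p[of v w] by simp
  finally show ?thesis by (simp add: add.assoc)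
qed

lemma norm_diff_sq:
  fixes u w :: "'a::real_inner"
  shows "(norm (u - w))\<^sup>2 = (norm u)\<^sup>2 - 2 * inner u w + (norm w)\<^sup>2"
  by (simp add: power2_norm_eq_inner inner_diff_left inner_diff_right inner_commute[of w u])

lemma three_point:
  "inner (gF a - gF b) (a - c) = bregman F gF c a + bregman F gF a b - bregman F gF c b"
  unfolding bregman_def by (simp add: inner_diff_left inner_diff_right algebra_simps)



lemma combine:
  fixes \<eta> \<mu> \<tau> \<theta> \<delta> c M N N' Dd R G Dg Ds Dfg Df Df' qh wh Yz Yz' T :: real
  assumes h1: "(1/\<eta>)*N' + \<mu>*N' + Yz' = (1/\<eta>)*N + Yz - (1/\<eta>)*Dd - 2*T - \<mu>*R + \<mu>*G - \<theta>*qh + c*\<eta>*\<theta>\<^sup>2*wh"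
    and h2: "2*Ds + Dg + (2*(1-\<tau>)/\<tau>)*Dfg - (2*(1-\<tau>)/\<tau>)*Df + ((2-\<tau>)/\<tau>)*Df' - M*Dd \<le> 2*T"
    and h3: "\<mu>/2*G \<le> Ds" "0 \<le> Dfg" "0 \<le> Df'" "0 \<le> N'" "0 \<le> Dd"
    and h4: "c*\<eta>*\<theta>\<^sup>2*wh \<le> \<theta>*qh"
    and h5: "\<delta>*Yz' \<le> (1/(2*\<eta>))*Dd + \<mu>*R + Dg"
    and h6: "M \<le> 1/(2*\<eta>)"
    and h7: "\<delta> \<le> \<eta>*\<mu>" "2*(1-\<tau>)*\<delta> \<le> \<tau>" "0 \<le> \<delta>" "0 < \<tau>" "\<tau> \<le> 1" "0 < \<eta>"
  shows "(1+\<delta>)*((1/\<eta>)*N' + Yz' + (2*(1-\<tau>)/\<tau>)*Df') \<le> (1/\<eta>)*N + Yz + (2*(1-\<tau>)/\<tau>)*Df"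
proof -
  have a1: "M*Dd \<le> (1/(2*\<eta>))*Dd" using h6 h3(5) by (rule mult_right_mono)
  have a2: "0 \<le> (2*(1-\<tau>)/\<tau>)*Dfg" using h3(2) h7 by simp
  have a3: "\<delta>*((1/\<eta>)*N') \<le> \<mu>*N'"
  proof -
    have "\<delta>*(1/\<eta>) \<le> \<mu>" using h7 by (simp add: field_simps)
    thus ?thesis using h3(4) by (metis mult.assoc mult_right_mono)
  qed
  have a4: "(1+\<delta>)*((2*(1-\<tau>)/\<tau>)*Df') \<le> ((2-\<tau>)/\<tau>)*Df'"
  proof -
    have "(1+\<delta>)*(2*(1-\<tau>)) \<le> 2-\<tau>" using h7(2) by (simp add: algebra_simps)
    hence "(1+\<delta>)*(2*(1-\<tau>))/\<tau> \<le> (2-\<tau>)/\<tau>" using h7(4) by (simp add: divide_right_mono)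
    hence "(1+\<delta>)*(2*(1-\<tau>)/\<tau>) \<le> (2-\<tau>)/\<tau>" by simp
    thus ?thesis using h3(3) by (metis mult.assoc mult_right_mono)
  qed
  have a5: "\<mu>*G \<le> 2*Ds" using h3(1) by simp
  have e: "(1+\<delta>)*((1/\<eta>)*N' + Yz' + (2*(1-\<tau>)/\<tau>)*Df') = (1/\<eta>)*N' + \<delta>*((1/\<eta>)*N') + Yz' + \<delta>*Yz' + (1+\<delta>)*((2*(1-\<tau>)/\<tau>)*Df')"
    by (simp add: algebra_simps add_divide_distrib)
  show ?thesis unfolding e using h1 h2 h4 h5 a1 a2 a3 a4 a5 by linarith
qed



lemma one_step:
  fixes F :: "'a::euclidean_space \<Rightarrow> real" and gF W :: "'a \<Rightarrow> 'a"
  assumes sc: "\<And>u v. F v + inner (gF v) (u - v) + \<mu> / 2 * (norm (u - v))\<^sup>2 \<le> F u"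
    and ds: "\<And>u v. F u \<le> F v + inner (gF v) (u - v) + L / 2 * (norm (u - v))\<^sup>2"
    and cc: "\<And>u v. (norm (gF u - gF v))\<^sup>2 \<le> 2 * L * bregman F gF u v"
    and lin: "linear W" and sym: "\<And>x y. inner (W x) y = inner x (W y)"
    and psd: "\<And>x. 0 \<le> inner x (W x)"
    and Wsq: "\<And>x. (norm (W x))\<^sup>2 \<le> lm * inner x (W x)"
    and qle: "\<And>x. lmin * inner x (W x) \<le> (norm (W x))\<^sup>2"
    and xs: "W xs = 0" and bz: "b + gF xs = W z"
    and p: "0 < \<eta>" "0 < \<mu>" "0 < \<tau>" "\<tau> \<le> 1" "0 < \<theta>" "0 < L" "0 < lm" "0 < lmin"
      "\<theta> * \<eta> * lm = 1" "0 \<le> \<delta>"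
    and c1: "\<delta> \<le> \<eta> * \<mu>" and c2: "2 * (1 - \<tau>) * \<delta> \<le> \<tau>" and c3: "4 * \<delta> * (lm / lmin) \<le> 1"
    and c4: "8 * \<delta> * \<eta> * (lm / lmin) * L \<le> 1" and c5: "4 * \<delta> * \<eta> * (lm / lmin) * \<mu> \<le> 1"
    and c6: "4 * \<eta> * \<tau> * L \<le> 2 - \<tau>"
    and xg_def: "xg = \<tau> *\<^sub>R a + (1 - \<tau>) *\<^sub>R f"
    and c_def: "c = inverse (1 + \<eta> * \<mu>)"
    and h_def: "h = c *\<^sub>R (a - \<eta> *\<^sub>R (gF xg - \<mu> *\<^sub>R xg + b))"
    and b'_def: "b' = b + \<theta> *\<^sub>R W h"
    and a'_def: "a' = c *\<^sub>R (a - \<eta> *\<^sub>R (gF xg - \<mu> *\<^sub>R xg + b'))"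
    and f'_def: "f' = xg + (2 * \<tau> / (2 - \<tau>)) *\<^sub>R (a' - a)"
  shows "(1 + \<delta>) * ((1/\<eta>) * (norm (a' - xs))\<^sup>2 + ((1/\<theta>) * inner (z + \<theta> *\<^sub>R h) (W (z + \<theta> *\<^sub>R h)) - c * \<eta> * (norm (W (z + \<theta> *\<^sub>R h)))\<^sup>2)
            + (2 * (1 - \<tau>) / \<tau>) * bregman F gF f' xs)
      \<le> (1/\<eta>) * (norm (a - xs))\<^sup>2 + ((1/\<theta>) * inner z (W z) - c * \<eta> * (norm (W z))\<^sup>2)
            + (2 * (1 - \<tau>) / \<tau>) * bregman F gF f xs"
proof -
  define g where "g = gF xg"
  define gs where "gs = gF xs"
  define d where "d = a' - a"
  define z' where "z' = z + \<theta> *\<^sub>R h"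
  define ep where "ep = b' + gs"
  have Wlin: "W (u + t *\<^sub>R v) = W u + t *\<^sub>R W v" for u v t
    by (simp add: linear_add[OF lin] linear_cmul[OF lin])
  have ep_eq: "ep = W z'" unfolding ep_def z'_def b'_def gs_def using bz Wlin
    by (simp add: algebra_simps)
  have emp: "0 < \<eta> * \<mu>" using p by simp
  have ne0: "1 + \<eta> * \<mu> \<noteq> 0" using emp by simp
  have c0: "c * (1 + \<eta> * \<mu>) = 1" unfolding c_def by (rule left_inverse[OF ne0])
  have cpos: "0 < c" "c \<le> 1" using emp unfolding c_def by (auto intro: inverse_le_1_iff[THEN iffD2])
  have a'1: "(1 + \<eta> * \<mu>) *\<^sub>R a' = a - \<eta> *\<^sub>R (g - \<mu> *\<^sub>R xg + b')"
    unfolding a'_def g_def using c0 by (simp add: mult.commute)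
  have K1: "d = - \<eta> *\<^sub>R ((g - gs) + \<mu> *\<^sub>R (a' - xg) + ep)"
  proof -
    have "a = (1 + \<eta> * \<mu>) *\<^sub>R a' + \<eta> *\<^sub>R (g - \<mu> *\<^sub>R xg + b')" using a'1 by (simp add: algebra_simps)
    thus ?thesis unfolding d_def ep_def by (simp add: algebra_simps)
  qed
  have K2: "a' = h - (c * \<eta> * \<theta>) *\<^sub>R W h"
    unfolding a'_def h_def b'_def by (simp add: algebra_simps)
  have N1: "(norm (a' - xs))\<^sup>2 = (norm (a - xs))\<^sup>2 + 2 * inner d (a' - xs) - (norm d)\<^sup>2"
  proof -
    have "a - xs = (a' - xs) - d" unfolding d_def by simp
    hence "(norm (a - xs))\<^sup>2 = (norm (a' - xs))\<^sup>2 - 2 * inner (a' - xs) d + (norm d)\<^sup>2"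
      by (simp only: norm_diff_sq)
    thus ?thesis by (simp add: inner_commute[of "a' - xs" d])
  qed
  have N2: "inner d (a' - xs) / \<eta> = - (inner (g - gs) (a' - xs) + \<mu> * inner (a' - xg) (a' - xs) + inner ep (a' - xs))"
    unfolding K1 using p by (simp add: inner_add_left)
  have N3: "2 * inner (a' - xg) (a' - xs) = (norm (a' - xs))\<^sup>2 + (norm (a' - xg))\<^sup>2 - (norm (xg - xs))\<^sup>2"
  proof -
    have e: "a' - xg = (a' - xs) - (xg - xs)" by simp
    have "(norm (a' - xg))\<^sup>2 = (norm (a' - xs))\<^sup>2 - 2 * inner (a' - xs) (xg - xs) + (norm (xg - xs))\<^sup>2"
      unfolding e by (rule norm_diff_sq)
    moreover have "inner (a' - xg) (a' - xs) = (norm (a' - xs))\<^sup>2 - inner (xg - xs) (a' - xs)"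
      unfolding e by (simp add: inner_diff_left power2_norm_eq_inner)
    ultimately show ?thesis by (simp add: inner_commute[of "xg - xs" "a' - xs"])
  qed
  have epxs: "inner ep xs = 0" unfolding ep_eq using sym[of z' xs] xs by simp
  have N4: "inner ep (a' - xs) = inner ep h - c * \<eta> * \<theta> * inner ep (W h)"
    unfolding K2 using epxs by (simp add: inner_diff_right)
  have Q1: "inner z' (W z') = inner z (W z) + 2 * \<theta> * inner (W z) h + \<theta>\<^sup>2 * inner h (W h)"
    unfolding z'_def by (rule quad_expand[OF lin sym])
  have Q2: "(norm (W z'))\<^sup>2 = (norm (W z))\<^sup>2 + 2 * \<theta> * inner (W z) (W h) + \<theta>\<^sup>2 * (norm (W h))\<^sup>2"
    unfolding z'_def Wlin
    by (simp only: power2_norm_eq_inner) (simp add: inner_add_left inner_add_right inner_commute[of "W h" "W z"] power2_eq_square algebra_simps)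
  have Q3: "inner ep h = inner (W z) h + \<theta> * inner h (W h)"
    unfolding ep_eq z'_def Wlin by (simp add: inner_add_left inner_commute[of "W h" h])
  have Q4: "inner ep (W h) = inner (W z) (W h) + \<theta> * (norm (W h))\<^sup>2"
    unfolding ep_eq z'_def Wlin by (simp add: inner_add_left power2_norm_eq_inner)
  define N where "N = (norm (a - xs))\<^sup>2"
  define N' where "N' = (norm (a' - xs))\<^sup>2"
  define Dd where "Dd = (norm d)\<^sup>2"
  define R where "R = (norm (a' - xg))\<^sup>2"
  define G where "G = (norm (xg - xs))\<^sup>2"
  define T where "T = inner (g - gs) (a' - xs)"
  define P where "P = inner (a' - xg) (a' - xs)"
  define E1 where "E1 = inner ep (a' - xs)"
  define qh where "qh = inner h (W h)"
  define wh where "wh = (norm (W h))\<^sup>2"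
  define Wzh where "Wzh = inner (W z) h"
  define WzWh where "WzWh = inner (W z) (W h)"
  define qz where "qz = inner z (W z)"
  define wz where "wz = (norm (W z))\<^sup>2"
  define qz' where "qz' = inner z' (W z')"
  define wz' where "wz' = (norm (W z'))\<^sup>2"
  define Yz where "Yz = (1/\<theta>) * qz - c * \<eta> * wz"
  define Yz' where "Yz' = (1/\<theta>) * qz' - c * \<eta> * wz'"
  define Ds where "Ds = bregman F gF xs xg"
  define Dg where "Dg = bregman F gF xg xs"
  define Dfg where "Dfg = bregman F gF f xg"
  define Df where "Df = bregman F gF f xs"
  define Df' where "Df' = bregman F gF f' xs"
  define M where "M = 2 * \<tau> * L / (2 - \<tau>)"
  define K where "K = 2 * (1 - \<tau>) / \<tau>"
  define K' where "K' = (2 - \<tau>) / \<tau>"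
  define chv where "chv = lm / lmin"
  have t2: "0 < 2 - \<tau>" using p by simp
  have s1: "(1/\<eta>)*N' = (1/\<eta>)*N + 2*(inner d (a' - xs) / \<eta>) - (1/\<eta>)*Dd"
    unfolding N'_def N_def Dd_def N1 by (simp add: algebra_simps add_divide_distrib diff_divide_distrib)
  have s2: "inner d (a' - xs) / \<eta> = - (T + \<mu> * P + E1)" unfolding T_def P_def E1_def by (rule N2)
  have s3: "2 * (\<mu> * P) = \<mu> * N' + \<mu> * R - \<mu> * G"
    using arg_cong[OF N3, of "(*) \<mu>"] unfolding P_def N'_def R_def G_def by (simp add: algebra_simps)
  have s4: "E1 = Wzh + \<theta> * qh - c * \<eta> * \<theta> * WzWh - c * \<eta> * \<theta>\<^sup>2 * wh"
    unfolding E1_def N4 Q3 Q4 Wzh_def qh_def WzWh_def wh_def by (simp add: algebra_simps power2_eq_square)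
  have s5: "(1/\<theta>) * qz' = (1/\<theta>) * qz + 2 * Wzh + \<theta> * qh"
    unfolding qz'_def Q1 qz_def Wzh_def qh_def using p by (simp add: algebra_simps power2_eq_square add_divide_distrib)
  have s6: "c * \<eta> * wz' = c * \<eta> * wz + 2 * (c * \<eta> * \<theta> * WzWh) + c * \<eta> * \<theta>\<^sup>2 * wh"
    unfolding wz'_def Q2 wz_def WzWh_def wh_def by (simp add: algebra_simps)
  have h1: "(1/\<eta>)*N' + \<mu>*N' + Yz' = (1/\<eta>)*N + Yz - (1/\<eta>)*Dd - 2*T - \<mu>*R + \<mu>*G - \<theta>*qh + c*\<eta>*\<theta>\<^sup>2*wh"
    unfolding Yz'_def Yz_def using s1 s2 s3 s4 s5 s6 by linarith
  have axs: "a - xs = (xg - xs) + ((1 - \<tau>) / \<tau>) *\<^sub>R (xg - f)"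
  proof -
    have "xg - f = \<tau> *\<^sub>R (a - f)" unfolding xg_def by (simp add: algebra_simps)
    hence "((1 - \<tau>) / \<tau>) *\<^sub>R (xg - f) = (1 - \<tau>) *\<^sub>R (a - f)" using p by simp
    thus ?thesis unfolding xg_def by (simp add: algebra_simps)
  qed
  have dfx: "d = ((2 - \<tau>) / (2 * \<tau>)) *\<^sub>R (f' - xg)"
    unfolding f'_def d_def using p t2 by simp
  have T1: "T = inner (g - gs) d + inner (g - gs) (xg - xs) + ((1 - \<tau>) / \<tau>) * inner (g - gs) (xg - f)"
  proof -
    have e: "a' - xs = d + ((xg - xs) + ((1 - \<tau>) / \<tau>) *\<^sub>R (xg - f))" using axs unfolding d_def by (simp add: algebra_simps)
    show ?thesis unfolding T_def e inner_add_right inner_scaleR_right by simp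
  qed
  have bz0: "bregman F gF xs xs = 0" by (simp add: bregman_def)
  have T2: "inner (g - gs) (xg - xs) = Ds + Dg"
    unfolding g_def gs_def Ds_def Dg_def using three_point[of gF xg xs xs F] bz0 by simp
  have T3: "inner (g - gs) (xg - f) = Dfg + Dg - Df"
    unfolding g_def gs_def Dfg_def Dg_def Df_def using three_point[of gF xg xs f F] by simp
  have T4: "Df' - Dg - L/2 * (norm (f' - xg))\<^sup>2 \<le> inner (g - gs) (f' - xg)"
  proof -
    have "F f' \<le> F xg + inner g (f' - xg) + L / 2 * (norm (f' - xg))\<^sup>2" unfolding g_def by (rule ds)
    moreover have "Df' - Dg = F f' - F xg - inner gs (f' - xg)"
      unfolding Df'_def Dg_def bregman_def gs_def by (simp add: inner_diff_right)
    ultimately show ?thesis by (simp add: inner_diff_left)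
  qed
  have T5: "inner (g - gs) d = ((2 - \<tau>) / (2 * \<tau>)) * inner (g - gs) (f' - xg)"
    unfolding dfx by simp
  have T6: "(norm (f' - xg))\<^sup>2 = (2 * \<tau> / (2 - \<tau>))\<^sup>2 * Dd"
  proof -
    have "f' - xg = (2 * \<tau> / (2 - \<tau>)) *\<^sub>R d" unfolding f'_def d_def by simp
    hence "norm (f' - xg) = (2 * \<tau> / (2 - \<tau>)) * norm d" using p t2 by simp
    thus ?thesis unfolding Dd_def by (simp only: power_mult_distrib)
  qed
  have K'pos: "0 \<le> K'" unfolding K'_def using p t2 by simp
  have T7: "K' * (Df' - Dg - L/2 * (norm (f' - xg))\<^sup>2) \<le> K' * inner (g - gs) (f' - xg)"
    using T4 K'pos by (rule mult_left_mono)
  have T8: "K' * (L/2 * (norm (f' - xg))\<^sup>2) = M * Dd"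
  proof -
    have ne: "\<tau> \<noteq> 0" "2 - \<tau> \<noteq> 0" using p t2 by auto
    show ?thesis unfolding T6 K'_def M_def using ne by (simp add: power2_eq_square divide_simps)
  qed
  have T9: "2 * inner (g - gs) d = K' * inner (g - gs) (f' - xg)"
    unfolding T5 K'_def using p by (simp add: divide_simps)
  have T10: "K' * Dg = 2 * Dg + K * Dg - Dg"
    unfolding K'_def K_def using p by (simp add: divide_simps algebra_simps)
  have T11: "2 * (((1 - \<tau>) / \<tau>) * inner (g - gs) (xg - f)) = K * Dfg + K * Dg - K * Df"
  proof -
    have Kx: "K = 2 * ((1 - \<tau>) / \<tau>)" unfolding K_def by simp
    show ?thesis unfolding T3 Kx by (simp only: distrib_left right_diff_distrib mult.assoc)
  qed
  have T12: "K' * (Df' - Dg - L/2 * (norm (f' - xg))\<^sup>2) = K' * Df' - K' * Dg - K' * (L/2 * (norm (f' - xg))\<^sup>2)"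
    by (simp add: algebra_simps)
  have h2: "2*Ds + Dg + K*Dfg - K*Df + K'*Df' - M*Dd \<le> 2*T"
    using T1 T2 T7 T8 T9 T10 T11 T12 by linarith
  have bge: "\<mu> / 2 * (norm (u - v))\<^sup>2 \<le> bregman F gF u v" for u v
    using sc[of v u] unfolding bregman_def by simp
  have bnn: "0 \<le> bregman F gF u v" for u v
    using bge[of u v] p by (smt (verit) zero_le_power2 mult_nonneg_nonneg divide_nonneg_pos)
  have h3a: "\<mu>/2*G \<le> Ds" unfolding G_def Ds_def using bge[of xs xg] by (simp add: norm_minus_commute)
  have h3b: "0 \<le> Dfg" "0 \<le> Df'" "0 \<le> N'" "0 \<le> Dd" "0 \<le> Dg" "0 \<le> R"
    unfolding Dfg_def Df'_def N'_def Dd_def Dg_def R_def using bnn by auto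
  have qh0: "0 \<le> qh" unfolding qh_def by (rule psd)
  have wh0: "0 \<le> wh" unfolding wh_def by simp
  have h4: "c*\<eta>*\<theta>\<^sup>2*wh \<le> \<theta>*qh"
  proof -
    have "c*\<eta>*\<theta>\<^sup>2*wh \<le> 1*\<eta>*\<theta>\<^sup>2*wh" using cpos p wh0 by (intro mult_right_mono) auto
    also have "\<dots> = \<eta>*\<theta>\<^sup>2*wh" by simp
    also have "\<dots> \<le> \<eta>*\<theta>\<^sup>2*(lm*qh)" using Wsq[of h] p unfolding wh_def qh_def by (intro mult_left_mono) auto
    also have "\<dots> = \<theta>*qh" using p(9) by (simp add: power2_eq_square algebra_simps)
    finally show ?thesis .
  qed
  define E where "E = (norm ep)\<^sup>2"
  define gg where "gg = (norm (g - gs))\<^sup>2"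
  have y1: "Yz' \<le> \<eta> * chv * E"
  proof -
    have "lmin * qz' \<le> E" unfolding qz'_def E_def ep_eq by (rule qle)
    hence "qz' \<le> E / lmin" using p by (simp add: field_simps)
    hence "(1/\<theta>) * qz' \<le> (1/\<theta>) * (E / lmin)" using p by (intro mult_left_mono) auto
    also have "(1/\<theta>) * (E / lmin) = \<eta> * chv * E" unfolding chv_def using p
      by (simp add: field_simps)
    finally have "(1/\<theta>) * qz' \<le> \<eta> * chv * E" .
    moreover have "0 \<le> c * \<eta> * wz'" unfolding wz'_def using cpos p by simp
    ultimately show ?thesis unfolding Yz'_def by linarith
  qed
  have epx: "ep = (- (1/\<eta>) *\<^sub>R d) + (- (g - gs)) + (- (\<mu> *\<^sub>R (a' - xg)))"
  proof -
    have "(1/\<eta>) *\<^sub>R d = - ((g - gs) + \<mu> *\<^sub>R (a' - xg) + ep)" unfolding K1 using p by simp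
    thus ?thesis by (simp add: algebra_simps)
  qed
  have y2: "E \<le> 2 * ((1/\<eta>)\<^sup>2 * Dd) + 4 * gg + 4 * (\<mu>\<^sup>2 * R)"
    unfolding E_def epx gg_def Dd_def R_def using norm_sum3[of "- (1/\<eta>) *\<^sub>R d" "- (g - gs)" "- (\<mu> *\<^sub>R (a' - xg))"]
    using p by (simp add: power_mult_distrib power_divide norm_minus_commute[of gs g])
  have y3: "gg \<le> 2 * L * Dg" unfolding gg_def Dg_def g_def gs_def by (rule cc)
  have chv0: "0 \<le> chv" unfolding chv_def using p by simp
  have y4: "\<delta> * Yz' \<le> \<delta> * (\<eta> * chv * (2 * ((1/\<eta>)\<^sup>2 * Dd) + 4 * (2 * L * Dg) + 4 * (\<mu>\<^sup>2 * R)))"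
  proof -
    have "E \<le> 2 * ((1/\<eta>)\<^sup>2 * Dd) + 4 * (2 * L * Dg) + 4 * (\<mu>\<^sup>2 * R)" using y2 y3 by linarith
    hence "\<eta> * chv * E \<le> \<eta> * chv * (2 * ((1/\<eta>)\<^sup>2 * Dd) + 4 * (2 * L * Dg) + 4 * (\<mu>\<^sup>2 * R))"
      using p chv0 by (intro mult_left_mono) auto
    thus ?thesis using y1 p by (meson mult_left_mono order_trans)
  qed
  have y5: "\<delta> * (\<eta> * chv * (2 * ((1/\<eta>)\<^sup>2 * Dd) + 4 * (2 * L * Dg) + 4 * (\<mu>\<^sup>2 * R)))
      = (2 * \<delta> * chv / \<eta>) * Dd + (8 * \<delta> * \<eta> * chv * L) * Dg + (4 * \<delta> * \<eta> * chv * \<mu>) * (\<mu> * R)"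
    using p by (simp add: power2_eq_square field_simps)
  have y6: "(2 * \<delta> * chv / \<eta>) * Dd \<le> (1/(2*\<eta>)) * Dd"
  proof -
    have "2 * \<delta> * chv / \<eta> \<le> 1/(2*\<eta>)" using c3 p unfolding chv_def by (simp add: field_simps)
    thus ?thesis using h3b(4) by (rule mult_right_mono)
  qed
  have y7: "(8 * \<delta> * \<eta> * chv * L) * Dg \<le> 1 * Dg"
    using c4 h3b(5) unfolding chv_def by (intro mult_right_mono) auto
  have y8: "(4 * \<delta> * \<eta> * chv * \<mu>) * (\<mu> * R) \<le> 1 * (\<mu> * R)"
    using c5 h3b(6) p unfolding chv_def by (intro mult_right_mono) auto
  have h5: "\<delta>*Yz' \<le> (1/(2*\<eta>))*Dd + \<mu>*R + Dg"
    using y4 y5 y6 y7 y8 by linarith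
  have h6: "M \<le> 1/(2*\<eta>)"
    unfolding M_def using c6 p t2 by (simp add: divide_simps algebra_simps)
  have fin: "(1+\<delta>)*((1/\<eta>)*N' + Yz' + (2*(1-\<tau>)/\<tau>)*Df') \<le> (1/\<eta>)*N + Yz + (2*(1-\<tau>)/\<tau>)*Df"
    by (rule combine[OF h1 h2[unfolded K_def K'_def] h3a h3b(1-4) h4 h5 h6 c1 c2 p(10) p(3) p(4) p(1)])
  show ?thesis using fin unfolding N'_def Yz'_def qz'_def wz'_def z'_def Df'_def N_def Yz_def qz_def wz_def Df_def .
qed



lemma params:
  fixes \<kappa> ch L \<mu> \<tau> \<eta> \<delta> :: real
  assumes k1: "1 \<le> \<kappa>" and c1: "1 \<le> ch" and L: "0 < L" and mu: "0 < \<mu>" and kd: "\<kappa> = L / \<mu>"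
    and td: "\<tau> = min 1 ((1/2) * sqrt (ch / \<kappa>))" and ed: "\<eta> = 1 / (4 * \<tau> * L)"
    and dd: "\<delta> = (1/4) * min (1 / sqrt (\<kappa> * ch)) (1 / ch)"
  shows "0 < \<tau>" "\<tau> \<le> 1" "0 < \<eta>" "0 \<le> \<delta>"
    "\<delta> \<le> \<eta> * \<mu>" "2 * (1 - \<tau>) * \<delta> \<le> \<tau>" "4 * \<delta> * ch \<le> 1"
    "8 * \<delta> * \<eta> * ch * L \<le> 1" "4 * \<delta> * \<eta> * ch * \<mu> \<le> 1" "4 * \<eta> * \<tau> * L \<le> 2 - \<tau>"
proof -
  define s where "s = sqrt (\<kappa> * ch)"
  define r where "r = sqrt (ch / \<kappa>)"
  have kp: "0 < \<kappa>" using k1 by simp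
  have cp: "0 < ch" using c1 by simp
  have sp: "0 < s" unfolding s_def using kp cp by simp
  have rp: "0 < r" unfolding r_def using kp cp by simp
  have s1: "1 \<le> s" unfolding s_def using k1 c1 mult_mono[of 1 \<kappa> 1 ch] by simp
  have rk: "r * \<kappa> = s"
  proof -
    have kk: "sqrt (\<kappa> * \<kappa>) = \<kappa>" using kp by simp
    have "r * \<kappa> = sqrt (ch / \<kappa>) * sqrt (\<kappa> * \<kappa>)" by (simp only: kk r_def)
    also have "\<dots> = sqrt (ch / \<kappa> * (\<kappa> * \<kappa>))" by (rule real_sqrt_mult[symmetric])
    also have "ch / \<kappa> * (\<kappa> * \<kappa>) = \<kappa> * ch" using kp by (simp add: field_simps)
    finally show ?thesis unfolding s_def .
  qed
  have sr: "s * r = ch"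
  proof -
    have "s * r = sqrt (\<kappa> * ch * (ch / \<kappa>))" unfolding s_def r_def by (rule real_sqrt_mult[symmetric])
    also have "\<kappa> * ch * (ch / \<kappa>) = ch * ch" using kp by (simp add: field_simps)
    also have "sqrt (ch * ch) = ch" using cp by simp
    finally show ?thesis .
  qed
  have tr: "\<tau> = min 1 (r / 2)" unfolding td r_def by simp
  have tp: "0 < \<tau>" unfolding tr using rp by simp
  show "0 < \<tau>" by (rule tp)
  show t1: "\<tau> \<le> 1" unfolding tr by simp
  show ep: "0 < \<eta>" unfolding ed using tp L by simp
  have ds: "\<delta> = (1/4) * min (1 / s) (1 / ch)" unfolding dd s_def ..
  show d0: "0 \<le> \<delta>" unfolding ds using sp cp by simp
  have dle1: "\<delta> \<le> 1 / (4 * s)" unfolding ds by simp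
  have dle2: "\<delta> \<le> 1 / (4 * ch)" unfolding ds by simp
  have emu: "\<eta> * \<mu> = 1 / (4 * \<tau> * \<kappa>)" unfolding ed kd using mu L by (simp add: field_simps)
  have eL: "\<eta> * L = 1 / (4 * \<tau>)" unfolding ed using L by (simp add: field_simps)
  have tk: "\<tau> * \<kappa> \<le> s / 2"
  proof -
    have "\<tau> \<le> r / 2" unfolding tr by simp
    hence "\<tau> * \<kappa> \<le> r / 2 * \<kappa>" using kp by (simp add: mult_right_mono)
    thus ?thesis using rk by simp
  qed
  show "\<delta> \<le> \<eta> * \<mu>"
  proof -
    have "1 / (4 * s) \<le> 1 / (4 * (\<tau> * \<kappa>))" using tk tp kp sp
      by (intro divide_left_mono mult_left_mono) (auto intro: order_trans[OF tk] mult_pos_pos)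
    thus ?thesis using dle1 emu by (simp add: mult.assoc)
  qed
  have twod: "2 * \<delta> \<le> \<tau>"
  proof -
    have a: "2 * \<delta> \<le> 1 / (2 * s)" using dle1 by (simp add: field_simps)
    have "1 / (2 * s) \<le> 1" using s1 by (simp add: field_simps)
    moreover have "1 / (2 * s) \<le> r / 2"
    proof -
      have "1 \<le> s * r" using sr c1 by simp
      thus ?thesis using sp by (simp add: field_simps)
    qed
    ultimately show ?thesis using a unfolding tr by linarith
  qed
  show "2 * (1 - \<tau>) * \<delta> \<le> \<tau>"
  proof -
    have "(1 - \<tau>) * (2 * \<delta>) \<le> 1 * (2 * \<delta>)" using tp d0 by (intro mult_right_mono) auto
    thus ?thesis using twod by (simp add: algebra_simps)
  qed
  have dc: "\<delta> * ch \<le> 1/4" using dle2 cp by (simp add: field_simps)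
  show "4 * \<delta> * ch \<le> 1" using dc by simp
  have dc2: "\<delta> * ch \<le> r / 4"
  proof -
    have "\<delta> * ch \<le> 1 / (4 * s) * ch" using dle1 cp by (intro mult_right_mono) auto
    also have "\<dots> = ch / (4 * s)" by simp
    also have "ch / (4 * s) = r / 4" using sr sp by (simp add: field_simps)
    finally show ?thesis .
  qed
  show "8 * \<delta> * \<eta> * ch * L \<le> 1"
  proof -
    have "2 * (\<delta> * ch) \<le> \<tau>" unfolding tr using dc dc2 by simp
    hence "8 * (\<delta> * ch) * (\<eta> * L) \<le> 1" unfolding eL using tp by (simp add: field_simps)
    thus ?thesis by (simp add: algebra_simps)
  qed
  show "4 * \<delta> * \<eta> * ch * \<mu> \<le> 1"
  proof -
    have "\<delta> * ch \<le> \<tau> * \<kappa>"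
    proof (cases "\<tau> = 1")
      case True thus ?thesis using dc k1 by simp
    next
      case False
      hence "\<tau> = r / 2" unfolding tr by (simp add: min_def split: if_splits)
      have "r / 4 \<le> r / 2 * 1" using rp by simp
      also have "\<dots> \<le> r / 2 * \<kappa>" using k1 rp by (intro mult_left_mono) auto
      finally have X: "r / 4 \<le> r / 2 * \<kappa>" .
      have "r / 4 \<le> \<tau> * \<kappa>" using X by (simp only: \<open>\<tau> = r / 2\<close>)
      thus ?thesis using dc2 by simp
    qed
    hence "4 * (\<delta> * ch) * (\<eta> * \<mu>) \<le> 1" unfolding emu using tp kp by (simp add: field_simps)
    thus ?thesis by (simp add: algebra_simps)
  qed
  show "4 * \<eta> * \<tau> * L \<le> 2 - \<tau>"
  proof -
    have "4 * \<eta> * \<tau> * L = 1" unfolding ed using tp L by (simp add: field_simps)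
    thus ?thesis using t1 by simp
  qed
qed

lemma logpart:
  fixes a b X C \<eta> \<epsilon> \<rho> :: real and k :: nat
  assumes a: "0 < a" and b: "0 < b" and rd: "\<rho> = 1 + (1/4) * min (1 / a) (1 / b)"
    and C: "0 \<le> C" and e: "0 < \<eta>" and X: "X \<le> \<eta> * (inverse (\<rho> ^ k) * C)"
    and ep: "0 < \<epsilon>" and kb: "real k \<ge> (1 + 4 * max a b) * ln (\<eta> * C / \<epsilon>)"
  shows "X \<le> \<epsilon>"
proof -
  define M where "M = max a b"
  have Mp: "0 < M" unfolding M_def using a by simp
  have mm: "min (1 / a) (1 / b) = 1 / M"
  proof (cases "a \<le> b")
    case True
    hence "1 / b \<le> 1 / a" using a by (simp add: frac_le)
    thus ?thesis using True unfolding M_def by (simp add: min_def max_def)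
  next
    case False
    hence "1 / a \<le> 1 / b" using b by (simp add: frac_le)
    thus ?thesis using False unfolding M_def by (simp add: min_def max_def)
  qed
  have rM: "\<rho> = 1 + 1 / (4 * M)" unfolding rd mm by simp
  have rp: "1 \<le> \<rho>" using Mp rM by simp
  have rk: "1 \<le> \<rho> ^ k" using rp by simp
  have X': "X \<le> \<eta> * C / \<rho> ^ k" using X by (simp add: field_simps)
  show ?thesis
  proof (cases "\<eta> * C \<le> \<epsilon>")
    case True
    have nn: "0 \<le> \<eta> * C" using e C by simp
    have "\<eta> * C * 1 \<le> \<eta> * C * \<rho> ^ k" by (rule mult_left_mono[OF rk nn])
    hence "\<eta> * C / \<rho> ^ k \<le> \<eta> * C" using rk by (simp add: pos_divide_le_eq)
    thus ?thesis using X' True by linarith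
  next
    case False
    hence q1: "1 < \<eta> * C / \<epsilon>" using ep by (simp add: field_simps)
    have lr: "1 / (1 + 4 * M) \<le> ln \<rho>"
    proof -
      have "- ln \<rho> = ln (1 / \<rho>)" using rp by (simp add: ln_div)
      also have "\<dots> \<le> 1 / \<rho> - 1" using rp by (intro ln_le_minus_one) simp
      finally have "1 - 1 / \<rho> \<le> ln \<rho>" by simp
      moreover have "1 - 1 / \<rho> = 1 / (1 + 4 * M)" unfolding rM using Mp by (simp add: field_simps)
      ultimately show ?thesis by simp
    qed
    have "ln (\<eta> * C / \<epsilon>) \<le> real k / (1 + 4 * M)" using kb Mp unfolding M_def[symmetric]
      by (simp add: field_simps mult.commute)
    also have "\<dots> = real k * (1 / (1 + 4 * M))" by simp
    also have "\<dots> \<le> real k * ln \<rho>" using lr by (intro mult_left_mono) auto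
    also have "\<dots> = ln (\<rho> ^ k)" using rp by (simp add: ln_realpow)
    finally have "ln (\<eta> * C / \<epsilon>) \<le> ln (\<rho> ^ k)" .
    hence "\<eta> * C / \<epsilon> \<le> \<rho> ^ k" using q1 rp by (subst (asm) ln_le_cancel_iff) auto
    hence "\<eta> * C / \<rho> ^ k \<le> \<epsilon>" using ep rk by (simp add: field_simps)
    thus ?thesis using X' by linarith
  qed
qed



lemma exists_two_distinct:
  assumes "CARD('n) \<ge> 2"
  obtains i j :: "'n::finite" where "i \<noteq> j"
proof -
  have "\<not> (\<forall>i j::'n. i = j)"
  proof
    assume all: "\<forall>i j::'n. i = j"
    hence u: "(UNIV :: 'n set) = {undefined}" by auto
    have "CARD('n) = card {undefined::'n}" using u by (rule arg_cong)
    hence "CARD('n) = 1" by simp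
    thus False using assms by simp
  qed
  thus ?thesis using that by auto
qed

lemma W_nonzero:
  fixes W :: "real^'d^'n \<Rightarrow> real^'d^'n"
  assumes n2: "CARD('n) \<ge> 2" and ker: "{x. W x = 0} = consensus"
  shows "\<exists>u. W u \<noteq> 0"
proof -
  obtain i j :: 'n where ij: "i \<noteq> j" using exists_two_distinct[OF n2] by blast
  obtain v :: "real^'d" where v: "v \<noteq> 0" using nonzero_exists by blast
  define x :: "real^'d^'n" where "x = (\<chi> k. if k = i then v else 0)"
  have "x $ i \<noteq> x $ j" unfolding x_def using ij v by simp
  hence "x \<notin> consensus" unfolding consensus_def by auto
  hence "W x \<noteq> 0" using ker by auto
  thus ?thesis by blast
qed

lemma consensus_line:
  assumes "x \<in> consensus" "v \<in> consensus"
  shows "x + t *\<^sub>R v \<in> consensus"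
proof -
  have "(x + t *\<^sub>R v) $ i = (x + t *\<^sub>R v) $ j" for i j
  proof -
    have "x $ i = x $ j" "v $ i = v $ j" using assms unfolding consensus_def by auto
    thus ?thesis by simp
  qed
  thus ?thesis unfolding consensus_def by auto
qed

lemma first_order:
  fixes F :: "real^'d^'n \<Rightarrow> real"
  assumes grad: "\<And>x. (F has_derivative (\<lambda>h. inner (gF x) h)) (at x)"
    and xc: "xstar \<in> consensus" and xmin: "\<And>x. x \<in> consensus \<Longrightarrow> F xstar \<le> F x"
    and v: "v \<in> consensus"
  shows "inner (gF xstar) v = 0"
proof -
  have d: "((\<lambda>t. F (xstar + t *\<^sub>R v)) has_real_derivative inner (gF (xstar + 0 *\<^sub>R v)) v) (at 0)"
    by (rule line_deriv[OF grad])
  have "inner (gF (xstar + 0 *\<^sub>R v)) v = 0"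
  proof (rule DERIV_local_min[OF d, of 1])
    show "\<forall>y. \<bar>0 - y\<bar> < 1 \<longrightarrow> F (xstar + 0 *\<^sub>R v) \<le> F (xstar + y *\<^sub>R v)"
      using xmin consensus_line[OF xc v] by simp
  qed simp
  thus ?thesis by simp
qed



lemma apapc_Suc_eq:
  assumes "apapc gF W \<eta> \<theta> \<alpha> \<tau> x0 y0 k = (a, b, f)"
  shows "apapc gF W \<eta> \<theta> \<alpha> \<tau> x0 y0 (Suc k) =
    (let xg = \<tau> *\<^sub>R a + (1 - \<tau>) *\<^sub>R f;
         h = inverse (1 + \<eta> * \<alpha>) *\<^sub>R (a - \<eta> *\<^sub>R (gF xg - \<alpha> *\<^sub>R xg + b));
         b' = b + \<theta> *\<^sub>R W h;
         a' = inverse (1 + \<eta> * \<alpha>) *\<^sub>R (a - \<eta> *\<^sub>R (gF xg - \<alpha> *\<^sub>R xg + b'))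
     in (a', b', xg + (2 * \<tau> / (2 - \<tau>)) *\<^sub>R (a' - a)))"
  using assms by (simp add: apapc_step_def Let_def)

lemma that_exI_helper: "P x \<Longrightarrow> (\<And>y. P y \<Longrightarrow> Q) \<Longrightarrow> Q" by blast

lemma main_aux:
  fixes F :: "real^'d^'n \<Rightarrow> real"
    and gF :: "real^'d^'n \<Rightarrow> real^'d^'n"
    and W :: "real^'d^'n \<Rightarrow> real^'d^'n"
    and \<mu> L :: real
    and x0 y0 xstar ystar :: "real^'d^'n"
    and \<kappa> chiW \<tau> \<eta> \<theta> C \<rho> :: real
  assumes n2: "CARD('n) \<ge> 2"
    and grad: "\<And>x. (F has_derivative (\<lambda>h. inner (gF x) h)) (at x)"
    and sconv: "strongly_convex \<mu> F"
    and smooth: "\<And>x y. norm (gF x - gF y) \<le> L * norm (x - y)"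
    and mu_pos: "0 < \<mu>" and mu_le_L: "\<mu> \<le> L"
    and W_lin: "linear W"
    and W_sym: "\<And>x y. inner (W x) y = inner x (W y)"
    and W_psd: "\<And>x. 0 \<le> inner x (W x)"
    and W_ker: "{x. W x = 0} = consensus"
    and xstar_cons: "xstar \<in> consensus"
    and xstar_min: "\<And>x. x \<in> consensus \<Longrightarrow> F xstar \<le> F x"
    and y0_range: "y0 \<in> range W"
    and kd: "\<kappa> = L / \<mu>" and chd: "chiW = chi W"
    and td: "\<tau> = min 1 ((1/2) * sqrt (chiW / \<kappa>))"
    and ed: "\<eta> = 1 / (4 * \<tau> * L)"
    and thd: "\<theta> = 1 / (\<eta> * lambda_max W)"
    and ysd: "ystar = - gF xstar"
    and Cd: "C = (1 / \<eta>) * (norm (x0 - xstar))\<^sup>2 + (1 / \<theta>) * Wdag_sqnorm W (y0 - ystar)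
             + (2 * (1 - \<tau>) / \<tau>) * bregman F gF (snd (snd (apapc gF W \<eta> \<theta> \<mu> \<tau> x0 y0 0))) xstar"
    and rd: "\<rho> = 1 + (1/4) * min (1 / sqrt (\<kappa> * chiW)) (1 / chiW)"
  shows "(\<forall>k::nat. (1 / \<eta>) * (norm (fst (apapc gF W \<eta> \<theta> \<mu> \<tau> x0 y0 k) - xstar))\<^sup>2
                   + (2 * (1 - \<tau>) / \<tau>) * bregman F gF (snd (snd (apapc gF W \<eta> \<theta> \<mu> \<tau> x0 y0 k))) xstar
                 \<le> inverse (\<rho> ^ k) * C)
      \<and> (\<forall>\<epsilon>>0. \<forall>k::nat.
            real k \<ge> (1 + 4 * max (sqrt (\<kappa> * chiW)) chiW) * ln (\<eta> * C / \<epsilon>)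
            \<longrightarrow> (norm (fst (apapc gF W \<eta> \<theta> \<mu> \<tau> x0 y0 k) - xstar))\<^sup>2 \<le> \<epsilon>)"
proof -
  define lm where "lm = lambda_max W"
  define lmin where "lmin = lambda_min_pos W"
  have nz: "\<exists>u. W u \<noteq> 0" by (rule W_nonzero[OF n2 W_ker])
  have lmE: "lm \<in> eigenvalues W" and lmq: "\<And>u. inner u (W u) \<le> lm * (norm u)\<^sup>2"
    unfolding lm_def using lmax_props[OF W_lin W_sym] by auto
  have lminp: "0 < lmin" and lminE: "lmin \<in> eigenvalues W"
    and lminq: "\<And>u. u \<in> range W \<Longrightarrow> lmin * (norm u)\<^sup>2 \<le> inner u (W u)"
    unfolding lmin_def using lmin_props[OF W_lin W_sym W_psd nz] by auto
  have lmin_le: "lmin \<le> lm" unfolding lm_def lambda_max_def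
    using Max_ge[OF eig_finite[OF W_sym] lminE] .
  have lmp: "0 < lm" using lminp lmin_le by simp
  have chW: "chiW = lm / lmin" unfolding chd chi_def lm_def lmin_def ..
  have ch1: "1 \<le> chiW" unfolding chW using lminp lmin_le by simp
  have Lp: "0 < L" using mu_pos mu_le_L by simp
  have k1: "1 \<le> \<kappa>" unfolding kd using mu_pos mu_le_L by simp
  define \<delta> where "\<delta> = (1/4) * min (1 / sqrt (\<kappa> * chiW)) (1 / chiW)"
  have rdd: "\<rho> = 1 + \<delta>" unfolding rd \<delta>_def ..
  note P = params[OF k1 ch1 Lp mu_pos kd td ed \<delta>_def]
  have thp: "0 < \<theta>" unfolding thd lm_def[symmetric] using P(3) lmp by simp
  have the: "\<theta> * \<eta> * lm = 1" unfolding thd lm_def[symmetric] using P(3) lmp by simp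
  have sc: "\<And>u v. F v + inner (gF v) (u - v) + \<mu> / 2 * (norm (u - v))\<^sup>2 \<le> F u"
    using sconv_grad[OF grad sconv] by blast
  have ds: "\<And>u v. F u \<le> F v + inner (gF v) (u - v) + L / 2 * (norm (u - v))\<^sup>2"
    using descent[OF grad smooth] by blast
  have cc: "\<And>u v. (norm (gF u - gF v))\<^sup>2 \<le> 2 * L * bregman F gF u v"
    using cocoercive[OF grad smooth sconv _ Lp] mu_pos by simp
  have bnn: "0 \<le> bregman F gF u v" for u v
  proof -
    have "\<mu> / 2 * (norm (u - v))\<^sup>2 \<le> bregman F gF u v" using sc[of v u] unfolding bregman_def by simp
    moreover have "0 \<le> \<mu> / 2 * (norm (u - v))\<^sup>2" using mu_pos by simp
    ultimately show ?thesis by linarith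
  qed
  have Wsq: "\<And>x. (norm (W x))\<^sup>2 \<le> lm * inner x (W x)"
    by (rule Wsq_le[OF W_lin W_sym W_psd lmq]) (use lmp in simp)
  have qle: "\<And>x. lmin * inner x (W x) \<le> (norm (W x))\<^sup>2"
    by (rule q_le[OF W_lin W_sym W_psd lminp lminq])
  have Wxs: "W xstar = 0" using xstar_cons W_ker by auto
  have ys_range: "ystar \<in> range W"
  proof (rule in_range_if_orth_ker[OF W_lin W_sym])
    fix k assume "W k = 0"
    hence "k \<in> consensus" using W_ker by auto
    have "inner (gF xstar) k = 0" using first_order[where F=F and gF=gF and xstar=xstar and v=k] grad xstar_cons xstar_min \<open>k \<in> consensus\<close> by metis
    thus "inner ystar k = 0" unfolding ysd by simp
  qed
  have sub: "subspace (range W)" by (rule linear_subspace_image[OF W_lin subspace_UNIV])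
  define X where "X = (\<lambda>k. fst (apapc gF W \<eta> \<theta> \<mu> \<tau> x0 y0 k))"
  define Y where "Y = (\<lambda>k. fst (snd (apapc gF W \<eta> \<theta> \<mu> \<tau> x0 y0 k)))"
  define XF where "XF = (\<lambda>k. snd (snd (apapc gF W \<eta> \<theta> \<mu> \<tau> x0 y0 k)))"
  have it: "apapc gF W \<eta> \<theta> \<mu> \<tau> x0 y0 k = (X k, Y k, XF k)" for k
    unfolding X_def Y_def XF_def by simp
  have itS: "apapc gF W \<eta> \<theta> \<mu> \<tau> x0 y0 (Suc k) = apapc_step gF W \<eta> \<theta> \<mu> \<tau> (X k, Y k, XF k)" for k
    by (simp only: apapc.simps(2) it)
  define c where "c = inverse (1 + \<eta> * \<mu>)"
  define K where "K = 2 * (1 - \<tau>) / \<tau>"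
  define \<Phi> where "\<Phi> = (\<lambda>k. (1/\<eta>) * (norm (X k - xstar))\<^sup>2
      + ((1/\<theta>) * Wdag_sqnorm W (Y k - ystar) - c * \<eta> * (norm (Y k - ystar))\<^sup>2) + K * bregman F gF (XF k) xstar)"
  have emu: "0 < \<eta> * \<mu>" using P(3) mu_pos by simp
  have cp: "0 < c" "c \<le> 1" unfolding c_def using emu
    by (auto intro: inverse_le_1_iff[THEN iffD2])
  have Yr: "Y k - ystar \<in> range W" for k
  proof (induction k)
    case 0
    show ?case using y0_range ys_range unfolding Y_def by (simp add: subspace_diff[OF sub])
  next
    case (Suc k)
    obtain z where z: "Y k - ystar = W z" using Suc by (elim rangeE) simp
    let ?xg = "\<tau> *\<^sub>R X k + (1 - \<tau>) *\<^sub>R XF k"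
    let ?h = "inverse (1 + \<eta> * \<mu>) *\<^sub>R (X k - \<eta> *\<^sub>R (gF ?xg - \<mu> *\<^sub>R ?xg + Y k))"
    have "Y (Suc k) = Y k + \<theta> *\<^sub>R W ?h" by (simp only: Y_def[THEN fun_cong[of _ _ "Suc k"]] itS[of k]) (simp add: apapc_step_def Let_def Y_def)
    then obtain hh where hh: "Y (Suc k) = Y k + \<theta> *\<^sub>R W hh" by (rule that_exI_helper)
    have "Y (Suc k) - ystar = (Y k - ystar) + \<theta> *\<^sub>R W hh" unfolding hh by simp
    also have "\<dots> = W z + \<theta> *\<^sub>R W hh" by (simp only: z)
    also have "\<dots> = W (z + \<theta> *\<^sub>R hh)" by (simp add: linear_add[OF W_lin] linear_cmul[OF W_lin])
    finally have "Y (Suc k) - ystar = W (z + \<theta> *\<^sub>R hh)" .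
    thus ?case by simp
  qed
  have Ynn: "0 \<le> (1/\<theta>) * Wdag_sqnorm W (Y k - ystar) - c * \<eta> * (norm (Y k - ystar))\<^sup>2" for k
  proof -
    obtain z where z: "Y k - ystar = W z" using Yr[of k] by (elim rangeE) simp
    have "c * \<eta> * (norm (W z))\<^sup>2 \<le> 1 * \<eta> * (norm (W z))\<^sup>2" using cp P(3) by (intro mult_right_mono) auto
    also have "\<dots> \<le> \<eta> * (lm * inner z (W z))" using Wsq[of z] P(3) by simp
    also have "\<dots> = (1/\<theta>) * inner z (W z)" using the thp by (simp add: field_simps)
    finally show ?thesis unfolding z dag_sq[OF W_lin W_sym] by simp
  qed
  have Kn: "0 \<le> K" unfolding K_def using P(1,2) by simp
  have step: "(1 + \<delta>) * \<Phi> (Suc k) \<le> \<Phi> k" for k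
  proof -
    obtain z where z: "Y k - ystar = W z" using Yr[of k] by (elim rangeE) simp
    define xg where "xg = \<tau> *\<^sub>R X k + (1 - \<tau>) *\<^sub>R XF k"
    define h where "h = c *\<^sub>R (X k - \<eta> *\<^sub>R (gF xg - \<mu> *\<^sub>R xg + Y k))"
    define b' where "b' = Y k + \<theta> *\<^sub>R W h"
    define a' where "a' = c *\<^sub>R (X k - \<eta> *\<^sub>R (gF xg - \<mu> *\<^sub>R xg + b'))"
    define f' where "f' = xg + (2 * \<tau> / (2 - \<tau>)) *\<^sub>R (a' - X k)"
    have S: "X (Suc k) = a'" "Y (Suc k) = b'" "XF (Suc k) = f'"
      by (simp_all only: X_def[THEN fun_cong[of _ _ "Suc k"]] Y_def[THEN fun_cong[of _ _ "Suc k"]] XF_def[THEN fun_cong[of _ _ "Suc k"]] itS[of k])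
        (simp_all add: apapc_step_def Let_def a'_def b'_def f'_def h_def xg_def c_def X_def Y_def XF_def)
    have bz: "Y k + gF xstar = W z" using z ysd by simp
    have c3': "4 * \<delta> * (lm / lmin) \<le> 1" using P(7) chW by simp
    have c4': "8 * \<delta> * \<eta> * (lm / lmin) * L \<le> 1" using P(8) chW by simp
    have c5': "4 * \<delta> * \<eta> * (lm / lmin) * \<mu> \<le> 1" using P(9) chW by simp
    have OS: "(1 + \<delta>) * ((1/\<eta>) * (norm (a' - xstar))\<^sup>2 + ((1/\<theta>) * inner (z + \<theta> *\<^sub>R h) (W (z + \<theta> *\<^sub>R h)) - c * \<eta> * (norm (W (z + \<theta> *\<^sub>R h)))\<^sup>2)
            + (2 * (1 - \<tau>) / \<tau>) * bregman F gF f' xstar)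
      \<le> (1/\<eta>) * (norm (X k - xstar))\<^sup>2 + ((1/\<theta>) * inner z (W z) - c * \<eta> * (norm (W z))\<^sup>2)
            + (2 * (1 - \<tau>) / \<tau>) * bregman F gF (XF k) xstar"
      by (rule one_step[OF sc ds cc W_lin W_sym W_psd Wsq qle Wxs bz P(3) mu_pos P(1) P(2) thp Lp lmp lminp the P(4)
        P(5) P(6) c3' c4' c5' P(10) xg_def c_def h_def b'_def a'_def f'_def])
    have Yk: "Y k - ystar = W z" by (rule z)
    have Yk1: "Y (Suc k) - ystar = W (z + \<theta> *\<^sub>R h)"
    proof -
      have "Y (Suc k) - ystar = (Y k - ystar) + \<theta> *\<^sub>R W h" unfolding S b'_def by simp
      also have "\<dots> = W z + \<theta> *\<^sub>R W h" by (simp only: z)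
      also have "\<dots> = W (z + \<theta> *\<^sub>R h)" by (simp add: linear_add[OF W_lin] linear_cmul[OF W_lin])
      finally show ?thesis .
    qed
    have e1: "\<Phi> (Suc k) = (1/\<eta>) * (norm (a' - xstar))\<^sup>2 + ((1/\<theta>) * inner (z + \<theta> *\<^sub>R h) (W (z + \<theta> *\<^sub>R h)) - c * \<eta> * (norm (W (z + \<theta> *\<^sub>R h)))\<^sup>2)
            + (2 * (1 - \<tau>) / \<tau>) * bregman F gF f' xstar"
      unfolding \<Phi>_def K_def Yk1 dag_sq[OF W_lin W_sym] by (simp only: S)
    have e0: "\<Phi> k = (1/\<eta>) * (norm (X k - xstar))\<^sup>2 + ((1/\<theta>) * inner z (W z) - c * \<eta> * (norm (W z))\<^sup>2)
            + (2 * (1 - \<tau>) / \<tau>) * bregman F gF (XF k) xstar"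
      unfolding \<Phi>_def K_def Yk dag_sq[OF W_lin W_sym] ..
    show ?thesis unfolding e0 e1 by (rule OS)
  qed
  have ind: "(1 + \<delta>) ^ k * \<Phi> k \<le> \<Phi> 0" for k
  proof (induction k)
    case 0 show ?case by simp
  next
    case (Suc k)
    have "(1 + \<delta>) ^ Suc k * \<Phi> (Suc k) = (1 + \<delta>) ^ k * ((1 + \<delta>) * \<Phi> (Suc k))" by (simp add: algebra_simps)
    also have "\<dots> \<le> (1 + \<delta>) ^ k * \<Phi> k" using step[of k] P(4) by (intro mult_left_mono) auto
    finally show ?case using Suc by linarith
  qed
  have X0: "X 0 = x0" "Y 0 = y0" "XF 0 = x0" unfolding X_def Y_def XF_def by simp_all
  have Phi0: "\<Phi> 0 \<le> C"
  proof -
    have "0 \<le> c * \<eta> * (norm (Y 0 - ystar))\<^sup>2" using cp P(3) by simp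
    thus ?thesis unfolding \<Phi>_def Cd K_def XF_def[symmetric] using X0 by simp
  qed
  have lhs_le: "(1 / \<eta>) * (norm (X k - xstar))\<^sup>2 + K * bregman F gF (XF k) xstar \<le> \<Phi> k" for k
    unfolding \<Phi>_def using Ynn[of k] by simp
  have Phi_nn: "0 \<le> \<Phi> k" for k
  proof -
    have "0 \<le> (1 / \<eta>) * (norm (X k - xstar))\<^sup>2" using P(3) by simp
    moreover have "0 \<le> K * bregman F gF (XF k) xstar" using Kn bnn by simp
    ultimately show ?thesis using lhs_le[of k] by linarith
  qed
  have Cnn: "0 \<le> C" using Phi_nn[of 0] Phi0 by linarith
  have rpos: "0 < \<rho> ^ k" for k unfolding rdd using P(4) by simp
  have part1: "(1 / \<eta>) * (norm (X k - xstar))\<^sup>2 + K * bregman F gF (XF k) xstar \<le> inverse (\<rho> ^ k) * C" for k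
  proof -
    have "\<rho> ^ k * \<Phi> k \<le> C" using ind[of k] Phi0 unfolding rdd by linarith
    hence "\<Phi> k \<le> inverse (\<rho> ^ k) * C" using rpos[of k] by (simp add: field_simps)
    thus ?thesis using lhs_le[of k] by linarith
  qed
  have part2: "(norm (X k - xstar))\<^sup>2 \<le> \<epsilon>"
    if ep: "0 < \<epsilon>" and kb: "real k \<ge> (1 + 4 * max (sqrt (\<kappa> * chiW)) chiW) * ln (\<eta> * C / \<epsilon>)" for \<epsilon> k
  proof (rule logpart[OF _ _ rd Cnn P(3) _ ep kb])
    show "0 < sqrt (\<kappa> * chiW)" using k1 ch1 by simp
    show "0 < chiW" using ch1 by simp
    have "(1 / \<eta>) * (norm (X k - xstar))\<^sup>2 \<le> inverse (\<rho> ^ k) * C"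
      using part1[of k] Kn bnn[of "XF k" xstar] by (smt (verit) mult_nonneg_nonneg)
    hence "\<eta> * ((1 / \<eta>) * (norm (X k - xstar))\<^sup>2) \<le> \<eta> * (inverse (\<rho> ^ k) * C)"
      using P(3) by (intro mult_left_mono) auto
    thus "(norm (X k - xstar))\<^sup>2 \<le> \<eta> * (inverse (\<rho> ^ k) * C)" using P(3) by simp
  qed
  show ?thesis using part1 part2 unfolding X_def XF_def K_def by blast
qed

theorem theorem2:
  fixes F :: "real^'d^'n \<Rightarrow> real"
    and gF :: "real^'d^'n \<Rightarrow> real^'d^'n"
    and W :: "real^'d^'n \<Rightarrow> real^'d^'n"
    and \<mu> L :: real
    and x0 y0 xstar :: "real^'d^'n"
  assumes n2: "CARD('n) \<ge> 2"
    and grad: "\<And>x. (F has_derivative (\<lambda>h. inner (gF x) h)) (at x)"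
    and sconv: "strongly_convex \<mu> F"
    and smooth: "\<And>x y. norm (gF x - gF y) \<le> L * norm (x - y)"
    and mu_pos: "0 < \<mu>" and mu_le_L: "\<mu> \<le> L"
    and W_lin: "linear W"
    and W_sym: "\<And>x y. inner (W x) y = inner x (W y)"
    and W_psd: "\<And>x. 0 \<le> inner x (W x)"
    and W_ker: "{x. W x = 0} = consensus"
    and xstar_cons: "xstar \<in> consensus"
    and xstar_min: "\<And>x. x \<in> consensus \<Longrightarrow> F xstar \<le> F x"
    and y0_range: "y0 \<in> range W"
  shows
    "let \<kappa> = L / \<mu>; chiW = chi W;
         \<tau> = min 1 ((1/2) * sqrt (chiW / \<kappa>));
         \<eta> = 1 / (4 * \<tau> * L);
         \<theta> = 1 / (\<eta> * lambda_max W);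
         \<alpha> = \<mu>;
         ystar = - gF xstar;
         xs = (\<lambda>k. fst (apapc gF W \<eta> \<theta> \<alpha> \<tau> x0 y0 k));
         xfs = (\<lambda>k. snd (snd (apapc gF W \<eta> \<theta> \<alpha> \<tau> x0 y0 k)));
         C = (1 / \<eta>) * (norm (x0 - xstar))\<^sup>2 + (1 / \<theta>) * Wdag_sqnorm W (y0 - ystar)
             + (2 * (1 - \<tau>) / \<tau>) * bregman F gF (xfs 0) xstar;
         \<rho> = 1 + (1/4) * min (1 / sqrt (\<kappa> * chiW)) (1 / chiW)
     in (\<forall>k::nat. (1 / \<eta>) * (norm (xs k - xstar))\<^sup>2
                   + (2 * (1 - \<tau>) / \<tau>) * bregman F gF (xfs k) xstar
                 \<le> inverse (\<rho> ^ k) * C)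
      \<and> (\<forall>\<epsilon>>0. \<forall>k::nat.
            real k \<ge> (1 + 4 * max (sqrt (\<kappa> * chiW)) chiW) * ln (\<eta> * C / \<epsilon>)
            \<longrightarrow> (norm (xs k - xstar))\<^sup>2 \<le> \<epsilon>)"
  unfolding Let_def
  by (rule main_aux[where ystar = "- gF xstar", OF n2 grad sconv smooth mu_pos mu_le_L W_lin W_sym W_psd W_ker xstar_cons xstar_min y0_range]) simp_all

end
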